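(* Let $X$ be as in the context. Then $X$ is positive recurrent if either (a) $v(x)\gtrsim x^c$ for some constant $c\le 2$ and $\limsup_{x\to\infty}J(x)<c-1$, or (b) $v(x)\gtrsim x^c$ for some constant $c>2$ and $\limsup_{x\to\infty}H_1(x)<1$.
   Context: Let $\mathbb S\subseteq\mathbb Z_{\ge0}$ be an infinite set and let $X$ be an irreducible continuous-time Markov chain on $\mathbb S$ whose generator acts on functions $f:\mathbb S\to\mathbb R$ by $\mathcal A f(x)=\sum_{\eta\in\mathbb Z}\lambda_\eta(x)\big(f(x+\eta)-f(x)\big)$, where $\lambda_\eta(x)$ is the rate of the jump $x\to x+\eta$ (and $\lambda_\eta(x)=0$ whenever $x+\eta\notin\mathbb S$). Standing assumption: (a) there is a finite set $\Gamma\subset\mathbb Z$ such that $\lambda_\eta\equiv0$ for $\eta\notin\Gamma$; (b) $0\le\lambda_\eta(x)<\infty$ for all $x,\eta$. Define $m(x)=\sum_{\eta}\eta\,\lambda_\eta(x)$, $v(x)=\frac12\sum_\eta\eta^2\lambda_\eta(x)$ (positive on $\mathbb S$), $J(x)=\dfrac{m(x)x}{v(x)}$, and for $x>1$, $H_1(x)=\dfrac{(\log x)(m(x)x-v(x))}{v(x)}$. Notation: $g\gtrsim h$ means there is $C>0$ with $h(x)\le Cg(x)$ for all sufficiently large $x\in\mathbb S$. *)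

theory Defs
  imports "HOL-Analysis.Analysis"
begin

text \<open>A chain on S (a set of naturals) is given by rates lam eta x of the jump x -> x + eta
  (eta an integer), and a finite set Gamma of possible jumps.\<close>

definition drift :: "int set \<Rightarrow> (int \<Rightarrow> nat \<Rightarrow> real) \<Rightarrow> nat \<Rightarrow> real" where
  "drift \<Gamma> lam x = (\<Sum>\<eta>\<in>\<Gamma>. real_of_int \<eta> * lam \<eta> x)"

definition diffu :: "int set \<Rightarrow> (int \<Rightarrow> nat \<Rightarrow> real) \<Rightarrow> nat \<Rightarrow> real" where
  "diffu \<Gamma> lam x = (1/2) * (\<Sum>\<eta>\<in>\<Gamma>. (real_of_int \<eta>)^2 * lam \<eta> x)"

definition Jfun :: "int set \<Rightarrow> (int \<Rightarrow> nat \<Rightarrow> real) \<Rightarrow> nat \<Rightarrow> real" where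
  "Jfun \<Gamma> lam x = drift \<Gamma> lam x * real x / diffu \<Gamma> lam x"

definition H1fun :: "int set \<Rightarrow> (int \<Rightarrow> nat \<Rightarrow> real) \<Rightarrow> nat \<Rightarrow> real" where
  "H1fun \<Gamma> lam x = ln (real x) * (drift \<Gamma> lam x * real x - diffu \<Gamma> lam x) / diffu \<Gamma> lam x"

definition qrate :: "int set \<Rightarrow> (int \<Rightarrow> nat \<Rightarrow> real) \<Rightarrow> nat \<Rightarrow> real" where
  "qrate \<Gamma> lam x = (\<Sum>\<eta>\<in>\<Gamma> - {0}. lam \<eta> x)"

definition jump_prob :: "int set \<Rightarrow> (int \<Rightarrow> nat \<Rightarrow> real) \<Rightarrow> nat \<Rightarrow> nat \<Rightarrow> real" where
  "jump_prob \<Gamma> lam x y = (if y = x then 0 else lam (int y - int x) x / qrate \<Gamma> lam x)"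

fun path_prob :: "int set \<Rightarrow> (int \<Rightarrow> nat \<Rightarrow> real) \<Rightarrow> nat \<Rightarrow> nat list \<Rightarrow> real" where
  "path_prob \<Gamma> lam x [] = 1"
| "path_prob \<Gamma> lam x (y # ys) = jump_prob \<Gamma> lam x y * path_prob \<Gamma> lam y ys"

text \<open>Expected total holding time (mean holding time in z is 1 / q z) spent in the states
  x, y1, ..., y(k-1) before the jump chain makes the last jump of the path [y1,...,yk].\<close>
fun hold_time :: "int set \<Rightarrow> (int \<Rightarrow> nat \<Rightarrow> real) \<Rightarrow> nat \<Rightarrow> nat list \<Rightarrow> real" where
  "hold_time \<Gamma> lam x [] = 0"
| "hold_time \<Gamma> lam x (y # ys) = 1 / qrate \<Gamma> lam x + hold_time \<Gamma> lam y ys"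

definition return_paths :: "nat set \<Rightarrow> nat \<Rightarrow> nat list set" where
  "return_paths S x = {ys. ys \<noteq> [] \<and> last ys = x \<and> x \<notin> set (butlast ys) \<and> set ys \<subseteq> S}"

text \<open>Positive recurrence of the (minimal) continuous-time chain: every state x is recurrent
  (return probability 1) and has finite mean return time
  E_x[T_x] = E_x[sum of holding times before the first return of the jump chain].\<close>
definition positive_recurrent :: "nat set \<Rightarrow> int set \<Rightarrow> (int \<Rightarrow> nat \<Rightarrow> real) \<Rightarrow> bool" where
  "positive_recurrent S \<Gamma> lam \<longleftrightarrow>
     (\<forall>x\<in>S.
        (\<integral>\<^sup>+ ys. ennreal (path_prob \<Gamma> lam x ys) \<partial>count_space (return_paths S x)) = 1 \<and>
        (\<integral>\<^sup>+ ys. ennreal (path_prob \<Gamma> lam x ys * hold_time \<Gamma> lam x ys)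
            \<partial>count_space (return_paths S x)) < \<infinity>)"

fun pos_path :: "(int \<Rightarrow> nat \<Rightarrow> real) \<Rightarrow> nat \<Rightarrow> nat list \<Rightarrow> bool" where
  "pos_path lam x [] = True"
| "pos_path lam x (y # ys) = (y \<noteq> x \<and> lam (int y - int x) x > 0 \<and> pos_path lam y ys)"

definition irreducible :: "nat set \<Rightarrow> (int \<Rightarrow> nat \<Rightarrow> real) \<Rightarrow> bool" where
  "irreducible S lam \<longleftrightarrow>
     (\<forall>x\<in>S. \<forall>y\<in>S. \<exists>ys. set ys \<subseteq> S \<and> last (x # ys) = y \<and> pos_path lam x ys)"

definition gtrsim :: "nat set \<Rightarrow> (nat \<Rightarrow> real) \<Rightarrow> (nat \<Rightarrow> real) \<Rightarrow> bool" where
  "gtrsim S g h \<longleftrightarrow> (\<exists>C>0. \<forall>\<^sub>F x in inf sequentially (principal S). h x \<le> C * g x)"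

end

theory Submission
  imports Defs "HOL-Real_Asymp.Real_Asymp"
begin

locale mc =
  fixes S :: "nat set" and \<Gamma> :: "int set" and lam :: "int \<Rightarrow> nat \<Rightarrow> real"
  assumes Gamma_fin: "finite \<Gamma>"
    and Gamma_supp: "\<forall>x\<in>S. \<forall>\<eta>. \<eta> \<notin> \<Gamma> \<longrightarrow> lam \<eta> x = 0"
    and rates_nonneg: "\<forall>x\<in>S. \<forall>\<eta>. 0 \<le> lam \<eta> x"
    and rates_in_S: "\<forall>x\<in>S. \<forall>\<eta>. int x + \<eta> \<notin> int ` S \<longrightarrow> lam \<eta> x = 0"
    and v_pos: "\<forall>x\<in>S. diffu \<Gamma> lam x > 0"
begin

abbreviation q where "q \<equiv> qrate \<Gamma> lam"
abbreviation P where "P \<equiv> jump_prob \<Gamma> lam"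

definition Y :: "nat \<Rightarrow> nat set" where
  "Y x = {y \<in> S. y \<noteq> x \<and> int y - int x \<in> \<Gamma>}"

lemma Y_sub: "Y x \<subseteq> S" by (auto simp: Y_def)

lemma Gbound: "\<exists>G::nat. \<forall>\<eta>\<in>\<Gamma>. \<bar>\<eta>\<bar> \<le> int G"
proof -
  have "\<exists>G::int. \<forall>\<eta>\<in>\<Gamma>. \<bar>\<eta>\<bar> \<le> G"
    using Gamma_fin by (intro exI[of _ "Max (abs ` \<Gamma>)"]) auto
  then obtain G :: int where "\<forall>\<eta>\<in>\<Gamma>. \<bar>\<eta>\<bar> \<le> G" by auto
  hence "\<forall>\<eta>\<in>\<Gamma>. \<bar>\<eta>\<bar> \<le> int (nat G)"
  proof (intro ballI)
    fix \<eta> assume "\<forall>\<eta>\<in>\<Gamma>. \<bar>\<eta>\<bar> \<le> G" "\<eta> \<in> \<Gamma>"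
    hence "\<bar>\<eta>\<bar> \<le> G" by blast
    thus "\<bar>\<eta>\<bar> \<le> int (nat G)" by linarith
  qed
  thus ?thesis by blast
qed

lemma Y_finite: "finite (Y x)"
proof -
  have "Y x \<subseteq> (\<lambda>\<eta>. nat (int x + \<eta>)) ` \<Gamma>"
    unfolding Y_def by (force intro: image_eqI[where x="int y - int x" for y])
  thus ?thesis using Gamma_fin finite_surj by blast
qed

lemma q_pos: assumes "x \<in> S" shows "q x > 0"
proof (rule ccontr)
  assume "\<not> q x > 0"
  have nn: "\<forall>\<eta>\<in>\<Gamma> - {0}. 0 \<le> lam \<eta> x" using rates_nonneg assms by auto
  hence "q x \<ge> 0" unfolding qrate_def by (intro sum_nonneg) auto
  with \<open>\<not> q x > 0\<close> have "q x = 0" by simp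
  hence z: "\<forall>\<eta>\<in>\<Gamma> - {0}. lam \<eta> x = 0"
    unfolding qrate_def using sum_nonneg_eq_0_iff[of "\<Gamma> - {0}" "\<lambda>\<eta>. lam \<eta> x"] nn Gamma_fin by simp
  have "(\<Sum>\<eta>\<in>\<Gamma>. (real_of_int \<eta>)^2 * lam \<eta> x) = 0"
    by (rule sum.neutral) (use z in auto)
  hence "diffu \<Gamma> lam x = 0" unfolding diffu_def by simp
  thus False using v_pos assms by auto
qed

lemma P_nonneg: "x \<in> S \<Longrightarrow> 0 \<le> P x y"
  using q_pos[of x] rates_nonneg by (auto simp: jump_prob_def)

lemma P_zero: assumes "x \<in> S" "y \<notin> Y x" shows "P x y = 0"
proof (cases "y = x")
  case True thus ?thesis by (simp add: jump_prob_def)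
next
  case False
  show ?thesis
  proof (cases "y \<in> S")
    case True
    with False assms have "int y - int x \<notin> \<Gamma>" by (auto simp: Y_def)
    thus ?thesis using Gamma_supp assms False by (auto simp: jump_prob_def)
  next
    case F: False
    have "int x + (int y - int x) \<notin> int ` S" using F by auto
    thus ?thesis using rates_in_S assms False by (auto simp: jump_prob_def)
  qed
qed

definition Lg :: "(nat \<Rightarrow> real) \<Rightarrow> nat \<Rightarrow> real" where
  "Lg f x = (\<Sum>\<eta>\<in>\<Gamma>. lam \<eta> x * (f (nat (int x + \<eta>)) - f x))"

lemma gen_identity:
  assumes x: "x \<in> S"
  shows "(\<Sum>y\<in>Y x. P x y * f y) = f x + Lg f x / q x"
proof -
  define E where "E = {\<eta>\<in>\<Gamma>. \<eta> \<noteq> 0 \<and> int x + \<eta> \<in> int ` S}"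
  have E_fin: "finite E" using Gamma_fin unfolding E_def by auto
  have inj: "inj_on (\<lambda>\<eta>. nat (int x + \<eta>)) E"
    unfolding E_def by (rule inj_onI) auto
  have YE: "Y x = (\<lambda>\<eta>. nat (int x + \<eta>)) ` E"
  proof
    show "Y x \<subseteq> (\<lambda>\<eta>. nat (int x + \<eta>)) ` E"
    proof
      fix y assume "y \<in> Y x"
      hence "y \<in> S" "y \<noteq> x" "int y - int x \<in> \<Gamma>" by (auto simp: Y_def)
      thus "y \<in> (\<lambda>\<eta>. nat (int x + \<eta>)) ` E"
        unfolding E_def by (intro image_eqI[where x="int y - int x"]) auto
    qed
  next
    show "(\<lambda>\<eta>. nat (int x + \<eta>)) ` E \<subseteq> Y x"
          proof
      fix y assume "y \<in> (\<lambda>\<eta>. nat (int x + \<eta>)) ` E"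
      then obtain \<eta> where e: "\<eta> \<in> E" "y = nat (int x + \<eta>)" by auto
      then obtain w where w: "w \<in> S" "int x + \<eta> = int w" unfolding E_def by auto
      have "y = w" using e w by auto
      have d: "int y - int x = \<eta>" using e w by auto
      have "\<eta> \<in> \<Gamma>" "\<eta> \<noteq> 0" using e unfolding E_def by auto
      hence "int y - int x \<in> \<Gamma>" "y \<noteq> x" using d by auto
      thus "y \<in> Y x" using w \<open>y = w\<close> unfolding Y_def by auto
    qed
  qed
  have "(\<Sum>y\<in>Y x. P x y * f y) = (\<Sum>\<eta>\<in>E. P x (nat (int x + \<eta>)) * f (nat (int x + \<eta>)))"
    unfolding YE by (rule sum.reindex[OF inj, unfolded comp_def])
  also have "\<dots> = (\<Sum>\<eta>\<in>E. lam \<eta> x * f (nat (int x + \<eta>))) / q x"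
    unfolding sum_divide_distrib
  proof (rule sum.cong[OF refl])
    fix \<eta> assume "\<eta> \<in> E"
    hence "nat (int x + \<eta>) \<noteq> x" "int (nat (int x + \<eta>)) - int x = \<eta>" unfolding E_def by auto
    thus "P x (nat (int x + \<eta>)) * f (nat (int x + \<eta>)) = lam \<eta> x * f (nat (int x + \<eta>)) / q x"
      by (simp add: jump_prob_def)
  qed
  also have "(\<Sum>\<eta>\<in>E. lam \<eta> x * f (nat (int x + \<eta>))) = (\<Sum>\<eta>\<in>\<Gamma>-{0}. lam \<eta> x * f (nat (int x + \<eta>)))"
    by (rule sum.mono_neutral_left) (use Gamma_fin rates_in_S x in \<open>auto simp: E_def\<close>)
  also have "q x = (\<Sum>\<eta>\<in>\<Gamma>-{0}. lam \<eta> x)" by (simp add: qrate_def)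
  finally have 1: "(\<Sum>y\<in>Y x. P x y * f y) = (\<Sum>\<eta>\<in>\<Gamma>-{0}. lam \<eta> x * f (nat (int x + \<eta>))) / (\<Sum>\<eta>\<in>\<Gamma>-{0}. lam \<eta> x)" .
  have 2: "Lg f x = (\<Sum>\<eta>\<in>\<Gamma>-{0}. lam \<eta> x * (f (nat (int x + \<eta>)) - f x))"
    unfolding Lg_def by (rule sum.mono_neutral_right) (use Gamma_fin in auto)
  have 3: "(\<Sum>\<eta>\<in>\<Gamma>-{0}. lam \<eta> x) > 0" using q_pos[OF x] by (simp add: qrate_def)
  show ?thesis unfolding 1 2 using 3
    by (simp add: field_simps sum_subtractf sum_distrib_right sum_distrib_left qrate_def)
qed

lemma sumP: "x \<in> S \<Longrightarrow> (\<Sum>y\<in>Y x. P x y) = 1"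
  using gen_identity[of x "\<lambda>_. 1"] by (simp add: Lg_def)

lemma sumP_z: assumes "x \<in> S" "z \<in> S" shows "P x z + (\<Sum>y\<in>Y x - {z}. P x y) = 1"
proof (cases "z \<in> Y x")
  case True thus ?thesis using sumP[OF assms(1)] Y_finite sum.remove[of "Y x" z "P x"] by simp
next
  case False thus ?thesis using sumP[OF assms(1)] P_zero[OF assms(1) False] by simp
qed

lemma pp_nonneg: "x \<in> S \<Longrightarrow> set ys \<subseteq> S \<Longrightarrow> 0 \<le> path_prob \<Gamma> lam x ys"
  by (induction ys arbitrary: x) (auto intro!: mult_nonneg_nonneg P_nonneg)

lemma hold_nonneg: "x \<in> S \<Longrightarrow> set ys \<subseteq> S \<Longrightarrow> 0 \<le> hold_time \<Gamma> lam x ys"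
  by (induction ys arbitrary: x) (auto intro!: add_nonneg_nonneg less_imp_le[OF q_pos])

end

context mc begin

definition R :: "nat \<Rightarrow> nat \<Rightarrow> nat list set" where
  "R z n = {ys \<in> return_paths S z. length ys \<le> n}"

lemma R_0: "R z 0 = {}"
  by (auto simp: R_def return_paths_def)

lemma Cons_R: "y \<in> S \<Longrightarrow> y \<noteq> z \<Longrightarrow> ys \<in> R z n \<Longrightarrow> y # ys \<in> R z (Suc n)"
  by (auto simp: R_def return_paths_def)

lemma R_Suc_cases:
  assumes "ys \<in> R z (Suc n)"
  shows "ys = [z] \<or> (\<exists>y ys'. ys = y # ys' \<and> y \<in> S \<and> y \<noteq> z \<and> ys' \<in> R z n)"
proof -
  from assms obtain y ys' where ys: "ys = y # ys'"
    by (cases ys) (auto simp: R_def return_paths_def)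
  show ?thesis
  proof (cases "ys' = []")
    case True thus ?thesis using assms ys by (auto simp: R_def return_paths_def)
  next
    case False
    hence "butlast (y # ys') = y # butlast ys'" by simp
    thus ?thesis using assms ys False by (auto simp: R_def return_paths_def)
  qed
qed

lemma z_R: "z \<in> S \<Longrightarrow> [z] \<in> R z (Suc n)"
  by (auto simp: R_def return_paths_def)

lemma decomp:
  fixes F :: "nat list \<Rightarrow> ennreal"
  assumes z: "z \<in> S" and A: "finite A" "A \<subseteq> S - {z}"
    and F0: "\<And>y ys. y \<in> S - {z} - A \<Longrightarrow> F (y # ys) = 0"
  shows "(\<integral>\<^sup>+ys. F ys \<partial>count_space (R z (Suc n)))
       = F [z] + (\<Sum>y\<in>A. \<integral>\<^sup>+ys. F (y # ys) \<partial>count_space (R z n))"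
proof -
  have pw: "F ys * indicator (R z (Suc n)) ys
      = F ys * indicator {[z]} ys + (\<Sum>y\<in>A. F ys * indicator (Cons y ` R z n) ys)" for ys
  proof (cases "ys \<in> R z (Suc n)")
    case True
    from R_Suc_cases[OF True] show ?thesis
    proof
      assume "ys = [z]"
      moreover have "[z] \<notin> Cons y ` R z n" for y by (auto simp: R_def return_paths_def)
      ultimately show ?thesis using True by simp
    next
      assume "\<exists>y ys'. ys = y # ys' \<and> y \<in> S \<and> y \<noteq> z \<and> ys' \<in> R z n"
      then obtain y ys' where h: "ys = y # ys'" "y \<in> S" "y \<noteq> z" "ys' \<in> R z n" by blast
      have s: "(\<Sum>y'\<in>A. F ys * indicator (Cons y' ` R z n) ys) = (if y \<in> A then F ys else 0)"
      proof -
        have "(\<Sum>y'\<in>A. F ys * indicator (Cons y' ` R z n) ys) = (\<Sum>y'\<in>A. if y' = y then F ys else 0)"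
          by (rule sum.cong) (use h in \<open>auto simp: indicator_def\<close>)
        also have "\<dots> = (if y \<in> A then F ys else 0)" using A(1) by (simp add: sum.delta')
        finally show ?thesis .
      qed
      have "ys \<noteq> [z]" using h by auto
      thus ?thesis using True s F0[of y ys'] h by (auto simp: indicator_def)
    qed
  next
    case False
    have "ys \<notin> Cons y ` R z n" if "y \<in> A" for y
      using False Cons_R[of y z _ n] that A(2) by auto
    moreover have "ys \<noteq> [z]" using False z_R[OF z] by auto
    ultimately show ?thesis using False by (simp add: indicator_def)
  qed
  have "(\<integral>\<^sup>+ys. F ys \<partial>count_space (R z (Suc n)))
      = (\<integral>\<^sup>+ys. F ys * indicator (R z (Suc n)) ys \<partial>count_space UNIV)"
    by (rule nn_integral_count_space_indicator) (simp add: NO_MATCH_def)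
  also have "\<dots> = (\<integral>\<^sup>+ys. F ys * indicator {[z]} ys + (\<Sum>y\<in>A. F ys * indicator (Cons y ` R z n) ys) \<partial>count_space UNIV)"
    by (simp add: pw)
  also have "\<dots> = (\<integral>\<^sup>+ys. F ys * indicator {[z]} ys \<partial>count_space UNIV)
        + (\<Sum>y\<in>A. \<integral>\<^sup>+ys. F ys * indicator (Cons y ` R z n) ys \<partial>count_space UNIV)"
    by (simp add: nn_integral_add nn_integral_sum)
  also have "(\<integral>\<^sup>+ys. F ys * indicator {[z]} ys \<partial>count_space UNIV) = F [z]"
    by (simp add: nn_integral_indicator_singleton)
  finally have eq1: "(\<integral>\<^sup>+ys. F ys \<partial>count_space (R z (Suc n))) = F [z] + (\<Sum>y\<in>A. \<integral>\<^sup>+ys. F ys * indicator (Cons y ` R z n) ys \<partial>count_space UNIV)" .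
  have blk: "(\<integral>\<^sup>+ys. F ys * indicator (Cons y ` R z n) ys \<partial>count_space UNIV)
      = (\<integral>\<^sup>+ys. F (y # ys) \<partial>count_space (R z n))" for y
  proof -
    have "(\<integral>\<^sup>+ys. F ys * indicator (Cons y ` R z n) ys \<partial>count_space UNIV)
        = (\<integral>\<^sup>+ys. F ys \<partial>count_space (Cons y ` R z n))"
      by (rule nn_integral_count_space_indicator[symmetric]) (simp add: NO_MATCH_def)
    also have "\<dots> = (\<integral>\<^sup>+ys. F (y # ys) \<partial>count_space (R z n))"
      by (rule nn_integral_bij_count_space[symmetric]) (auto simp: bij_betw_def inj_on_def)
    finally show ?thesis .
  qed
  show ?thesis unfolding eq1 blk ..
qed

fun hr :: "nat \<Rightarrow> nat \<Rightarrow> nat \<Rightarrow> real" where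
  "hr z 0 x = 0"
| "hr z (Suc n) x = P x z + (\<Sum>y\<in>Y x - {z}. P x y * hr z n y)"

fun kr :: "nat \<Rightarrow> nat \<Rightarrow> nat \<Rightarrow> real" where
  "kr z 0 x = 0"
| "kr z (Suc n) x = P x z / q x + (\<Sum>y\<in>Y x - {z}. P x y / q x * hr z n y + P x y * kr z n y)"


lemma hr_nonneg: "x \<in> S \<Longrightarrow> 0 \<le> hr z n x"
proof (induction n arbitrary: x)
  case (Suc n) thus ?case using Y_sub
    by (auto intro!: add_nonneg_nonneg sum_nonneg mult_nonneg_nonneg P_nonneg)
qed simp

lemma kr_nonneg: "x \<in> S \<Longrightarrow> 0 \<le> kr z n x"
proof (induction n arbitrary: x)
  case (Suc n) thus ?case using Y_sub q_pos[OF Suc.prems]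
    by (auto intro!: add_nonneg_nonneg sum_nonneg mult_nonneg_nonneg P_nonneg hr_nonneg divide_nonneg_pos)
qed simp

lemma hn_eq:
  assumes z: "z \<in> S"
  shows "x \<in> S \<Longrightarrow> (\<integral>\<^sup>+ys. ennreal (path_prob \<Gamma> lam x ys) \<partial>count_space (R z n)) = ennreal (hr z n x)"
proof (induction n arbitrary: x)
  case 0 thus ?case by (simp add: R_0 nn_integral_count_space_finite)
next
  case (Suc n)
  have "(\<integral>\<^sup>+ys. ennreal (path_prob \<Gamma> lam x ys) \<partial>count_space (R z (Suc n)))
     = ennreal (path_prob \<Gamma> lam x [z]) + (\<Sum>y\<in>Y x - {z}. \<integral>\<^sup>+ys. ennreal (path_prob \<Gamma> lam x (y # ys)) \<partial>count_space (R z n))"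
    by (rule decomp[OF z]) (use Y_finite Y_sub P_zero[OF Suc.prems] in auto)
  also have "(\<integral>\<^sup>+ys. ennreal (path_prob \<Gamma> lam x (y # ys)) \<partial>count_space (R z n)) = ennreal (P x y) * ennreal (hr z n y)"
    if "y \<in> Y x - {z}" for y
  proof -
    have yS: "y \<in> S" using that Y_sub by auto
    have "(\<integral>\<^sup>+ys. ennreal (path_prob \<Gamma> lam x (y # ys)) \<partial>count_space (R z n))
        = (\<integral>\<^sup>+ys. ennreal (P x y) * ennreal (path_prob \<Gamma> lam y ys) \<partial>count_space (R z n))"
      by (simp add: ennreal_mult' P_nonneg[OF Suc.prems])
    also have "\<dots> = ennreal (P x y) * ennreal (hr z n y)"
      by (simp add: nn_integral_cmult Suc.IH[OF yS])
    finally show ?thesis .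
  qed
  hence "(\<Sum>y\<in>Y x - {z}. \<integral>\<^sup>+ys. ennreal (path_prob \<Gamma> lam x (y # ys)) \<partial>count_space (R z n))
      = (\<Sum>y\<in>Y x - {z}. ennreal (P x y * hr z n y))"
    using Y_sub by (auto intro!: sum.cong simp: ennreal_mult' P_nonneg[OF Suc.prems])
  also have "\<dots> = ennreal (\<Sum>y\<in>Y x - {z}. P x y * hr z n y)"
    using Y_sub by (intro sum_ennreal) (auto intro!: mult_nonneg_nonneg P_nonneg[OF Suc.prems] hr_nonneg)
  finally have e: "(\<integral>\<^sup>+ys. ennreal (path_prob \<Gamma> lam x ys) \<partial>count_space (R z (Suc n))) = ennreal (P x z) + ennreal (\<Sum>y\<in>Y x - {z}. P x y * hr z n y)" by simp
  have "0 \<le> (\<Sum>y\<in>Y x - {z}. P x y * hr z n y)"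
    using Y_sub by (intro sum_nonneg) (auto intro!: mult_nonneg_nonneg P_nonneg[OF Suc.prems] hr_nonneg)
  thus ?case unfolding e hr.simps by (rule ennreal_plus[OF P_nonneg[OF Suc.prems], symmetric])
qed

lemma R_sub: "ys \<in> R z n \<Longrightarrow> set ys \<subseteq> S"
  by (auto simp: R_def return_paths_def)

lemma kn_eq:
  assumes z: "z \<in> S"
  shows "x \<in> S \<Longrightarrow> (\<integral>\<^sup>+ys. ennreal (path_prob \<Gamma> lam x ys * hold_time \<Gamma> lam x ys) \<partial>count_space (R z n)) = ennreal (kr z n x)"
proof (induction n arbitrary: x)
  case 0 thus ?case by (simp add: R_0 nn_integral_count_space_finite)
next
  case (Suc n)
  have xS: "x \<in> S" by fact
  have Pn: "0 \<le> P x y" for y using P_nonneg[OF xS] .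
  have qp: "0 < q x" using q_pos[OF xS] .
  have nn: "0 \<le> P x y / q x * hr z n y + P x y * kr z n y" if "y \<in> Y x - {z}" for y
  proof -
    have yS: "y \<in> S" using that Y_sub by auto
    show ?thesis using Pn[of y] qp hr_nonneg[OF yS, of z n] kr_nonneg[OF yS, of z n] by simp
  qed
  have "(\<integral>\<^sup>+ys. ennreal (path_prob \<Gamma> lam x ys * hold_time \<Gamma> lam x ys) \<partial>count_space (R z (Suc n)))
     = ennreal (path_prob \<Gamma> lam x [z] * hold_time \<Gamma> lam x [z]) + (\<Sum>y\<in>Y x - {z}. \<integral>\<^sup>+ys. ennreal (path_prob \<Gamma> lam x (y # ys) * hold_time \<Gamma> lam x (y # ys)) \<partial>count_space (R z n))"
    by (rule decomp[OF z]) (use Y_finite Y_sub P_zero[OF xS] in auto)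
  also have "ennreal (path_prob \<Gamma> lam x [z] * hold_time \<Gamma> lam x [z]) = ennreal (P x z / q x)" by simp
  also have blk: "(\<integral>\<^sup>+ys. ennreal (path_prob \<Gamma> lam x (y # ys) * hold_time \<Gamma> lam x (y # ys)) \<partial>count_space (R z n))
      = ennreal (P x y / q x * hr z n y + P x y * kr z n y)"
    if "y \<in> Y x - {z}" for y
  proof -
    have yS: "y \<in> S" using that Y_sub by auto
    have "(\<integral>\<^sup>+ys. ennreal (path_prob \<Gamma> lam x (y # ys) * hold_time \<Gamma> lam x (y # ys)) \<partial>count_space (R z n))
        = (\<integral>\<^sup>+ys. ennreal (P x y / q x) * ennreal (path_prob \<Gamma> lam y ys)
             + ennreal (P x y) * ennreal (path_prob \<Gamma> lam y ys * hold_time \<Gamma> lam y ys) \<partial>count_space (R z n))"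
    proof (rule nn_integral_cong)
      fix ys assume "ys \<in> space (count_space (R z n))"
      hence ysS: "set ys \<subseteq> S" using R_sub by auto
      have a: "0 \<le> path_prob \<Gamma> lam y ys" using pp_nonneg[OF yS ysS] .
      have b: "0 \<le> hold_time \<Gamma> lam y ys" using hold_nonneg[OF yS ysS] .
      have "path_prob \<Gamma> lam x (y # ys) * hold_time \<Gamma> lam x (y # ys)
          = P x y / q x * path_prob \<Gamma> lam y ys + P x y * (path_prob \<Gamma> lam y ys * hold_time \<Gamma> lam y ys)"
        by (simp add: field_simps)
      moreover have "0 \<le> P x y / q x * path_prob \<Gamma> lam y ys" using Pn qp a by simp
      moreover have "0 \<le> P x y * (path_prob \<Gamma> lam y ys * hold_time \<Gamma> lam y ys)" using Pn a b by simp
      ultimately have "ennreal (path_prob \<Gamma> lam x (y # ys) * hold_time \<Gamma> lam x (y # ys))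
          = ennreal (P x y / q x * path_prob \<Gamma> lam y ys)
             + ennreal (P x y * (path_prob \<Gamma> lam y ys * hold_time \<Gamma> lam y ys))"
        by (simp only: ennreal_plus)
      also have "\<dots> = ennreal (P x y / q x) * ennreal (path_prob \<Gamma> lam y ys)
             + ennreal (P x y) * ennreal (path_prob \<Gamma> lam y ys * hold_time \<Gamma> lam y ys)"
        using Pn qp by (simp only: ennreal_mult' divide_nonneg_pos)
      finally show "ennreal (path_prob \<Gamma> lam x (y # ys) * hold_time \<Gamma> lam x (y # ys))
          = ennreal (P x y / q x) * ennreal (path_prob \<Gamma> lam y ys)
             + ennreal (P x y) * ennreal (path_prob \<Gamma> lam y ys * hold_time \<Gamma> lam y ys)" .
    qed
    also have "\<dots> = ennreal (P x y / q x) * ennreal (hr z n y) + ennreal (P x y) * ennreal (kr z n y)"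
      by (simp add: nn_integral_add nn_integral_cmult hn_eq[OF z yS] Suc.IH[OF yS])
    also have "\<dots> = ennreal (P x y / q x * hr z n y + P x y * kr z n y)"
    proof -
      have "0 \<le> P x y / q x" using Pn qp by simp
      hence "ennreal (P x y / q x) * ennreal (hr z n y) = ennreal (P x y / q x * hr z n y)"
        by (simp only: ennreal_mult')
      moreover have "ennreal (P x y) * ennreal (kr z n y) = ennreal (P x y * kr z n y)"
        using Pn by (simp only: ennreal_mult')
      moreover have "0 \<le> P x y / q x * hr z n y" "0 \<le> P x y * kr z n y"
        using Pn qp hr_nonneg[OF yS] kr_nonneg[OF yS] by simp_all
      ultimately show ?thesis by (simp only: ennreal_plus)
    qed
    finally show ?thesis .
  qed
  hence "(\<Sum>y\<in>Y x - {z}. \<integral>\<^sup>+ys. ennreal (path_prob \<Gamma> lam x (y # ys) * hold_time \<Gamma> lam x (y # ys)) \<partial>count_space (R z n))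
      = (\<Sum>y\<in>Y x - {z}. ennreal (P x y / q x * hr z n y + P x y * kr z n y))"
    by (intro sum.cong) auto
  also have "\<dots> = ennreal (\<Sum>y\<in>Y x - {z}. P x y / q x * hr z n y + P x y * kr z n y)"
    using nn by (intro sum_ennreal) auto
  finally have e: "(\<integral>\<^sup>+ys. ennreal (path_prob \<Gamma> lam x ys * hold_time \<Gamma> lam x ys) \<partial>count_space (R z (Suc n)))
     = ennreal (P x z / q x) + ennreal (\<Sum>y\<in>Y x - {z}. P x y / q x * hr z n y + P x y * kr z n y)" by simp
  have "0 \<le> (\<Sum>y\<in>Y x - {z}. P x y / q x * hr z n y + P x y * kr z n y)"
    using nn by (intro sum_nonneg) auto
  moreover have "0 \<le> P x z / q x" using Pn qp by simp
  ultimately show ?case unfolding e kr.simps by (simp only: ennreal_plus)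
qed

lemma SUP_R:
  fixes F :: "nat list \<Rightarrow> ennreal"
  shows "(\<integral>\<^sup>+ys. F ys \<partial>count_space (return_paths S z)) = (SUP n. \<integral>\<^sup>+ys. F ys \<partial>count_space (R z n))"
proof -
  have "(\<integral>\<^sup>+ys. F ys \<partial>count_space (return_paths S z)) = (\<integral>\<^sup>+ys. F ys * indicator (return_paths S z) ys \<partial>count_space UNIV)"
    by (rule nn_integral_count_space_indicator) (simp add: NO_MATCH_def)
  also have "\<dots> = (\<integral>\<^sup>+ys. (SUP n. F ys * indicator (R z n) ys) \<partial>count_space UNIV)"
  proof (rule nn_integral_cong)
    fix ys
    show "F ys * indicator (return_paths S z) ys = (SUP n. F ys * indicator (R z n) ys)"
    proof (cases "ys \<in> return_paths S z")
      case True
      have "(SUP n. F ys * indicator (R z n) ys) = F ys"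
      proof (rule antisym)
        show "(SUP n. F ys * indicator (R z n) ys) \<le> F ys"
          by (rule SUP_least) (simp add: indicator_def)
        have "F ys * indicator (R z (length ys)) ys = F ys" using True by (simp add: R_def)
        thus "F ys \<le> (SUP n. F ys * indicator (R z n) ys)"
          by (metis (no_types, lifting) SUP_upper UNIV_I)
      qed
      thus ?thesis using True by simp
    next
      case False
      hence "ys \<notin> R z n" for n by (simp add: R_def)
      thus ?thesis using False by simp
    qed
  qed
  also have "\<dots> = (SUP n. \<integral>\<^sup>+ys. F ys * indicator (R z n) ys \<partial>count_space UNIV)"
  proof (rule nn_integral_monotone_convergence_SUP)
    show "incseq (\<lambda>n ys. F ys * indicator (R z n) ys)"
      by (rule incseq_SucI, rule le_funI) (auto simp: indicator_def R_def)
  qed simp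
  also have "\<dots> = (SUP n. \<integral>\<^sup>+ys. F ys \<partial>count_space (R z n))"
    by (subst nn_integral_count_space_indicator) (simp_all add: NO_MATCH_def)
  finally show ?thesis .
qed

end

context mc begin

lemma hr_le1: "z \<in> S \<Longrightarrow> x \<in> S \<Longrightarrow> hr z n x \<le> 1"
proof (induction n arbitrary: x)
  case (Suc n)
  have "(\<Sum>y\<in>Y x - {z}. P x y * hr z n y) \<le> (\<Sum>y\<in>Y x - {z}. P x y)"
  proof (rule sum_mono)
    fix y assume "y \<in> Y x - {z}"
    hence yS: "y \<in> S" using Y_sub by auto
    show "P x y * hr z n y \<le> P x y"
      by (rule mult_left_le[OF Suc.IH[OF Suc.prems(1) yS] P_nonneg[OF Suc.prems(2), of y]])
  qed
  thus ?case using sumP_z[OF Suc.prems(2,1)] by simp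
qed simp

lemma hr_mono: "x \<in> S \<Longrightarrow> hr z n x \<le> hr z (Suc n) x"
proof (induction n arbitrary: x)
  case 0 thus ?case using hr_nonneg[OF 0, of z 1] by simp
next
  case (Suc n)
  have "(\<Sum>y\<in>Y x - {z}. P x y * hr z n y) \<le> (\<Sum>y\<in>Y x - {z}. P x y * hr z (Suc n) y)"
  proof (rule sum_mono)
    fix y assume "y \<in> Y x - {z}"
    hence "y \<in> S" using Y_sub by auto
    thus "P x y * hr z n y \<le> P x y * hr z (Suc n) y"
      using Suc.IH[of y] P_nonneg[OF Suc.prems, of y] by (simp add: mult_left_mono)
  qed
  thus ?case by simp
qed

definition hl :: "nat \<Rightarrow> nat \<Rightarrow> real" where "hl z x = (SUP n. hr z n x)"

lemma hr_lim: assumes "z \<in> S" "x \<in> S" shows "(\<lambda>n. hr z n x) \<longlonglongrightarrow> hl z x"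
  unfolding hl_def
  by (rule LIMSEQ_incseq_SUP) (use hr_le1[OF assms] hr_mono[OF assms(2)] in \<open>auto simp: incseq_SucI bdd_above_def\<close>)

lemma hl_bounds: assumes "z \<in> S" "x \<in> S" shows "0 \<le> hl z x" "hl z x \<le> 1"
proof -
  have "(\<lambda>n. hr z n x) \<longlonglongrightarrow> hl z x" by (rule hr_lim[OF assms])
  thus "0 \<le> hl z x" by (rule LIMSEQ_le_const) (use hr_nonneg[OF assms(2)] in auto)
  show "hl z x \<le> 1" by (rule LIMSEQ_le_const2[OF hr_lim[OF assms]]) (use hr_le1[OF assms] in auto)
qed

lemma hl_harm: assumes z: "z \<in> S" and x: "x \<in> S"
  shows "hl z x = P x z + (\<Sum>y\<in>Y x - {z}. P x y * hl z y)"
proof -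
  have "(\<lambda>n. hr z (Suc n) x) \<longlonglongrightarrow> hl z x" using hr_lim[OF z x] by (rule LIMSEQ_Suc)
  moreover have "(\<lambda>n. hr z (Suc n) x) \<longlonglongrightarrow> P x z + (\<Sum>y\<in>Y x - {z}. P x y * hl z y)"
    unfolding hr.simps
    by (intro tendsto_add tendsto_const tendsto_sum tendsto_mult hr_lim z) (use Y_sub in auto)
  ultimately show ?thesis by (rule LIMSEQ_unique)
qed

lemma ret_prob_eq: assumes z: "z \<in> S" and x: "x \<in> S"
  shows "(\<integral>\<^sup>+ys. ennreal (path_prob \<Gamma> lam x ys) \<partial>count_space (return_paths S z)) = ennreal (hl z x)"
proof -
  have "(\<integral>\<^sup>+ys. ennreal (path_prob \<Gamma> lam x ys) \<partial>count_space (return_paths S z)) = (SUP n. ennreal (hr z n x))"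
    by (simp only: SUP_R hn_eq[OF z x])
  also have "\<dots> = ennreal (hl z x)"
  proof (rule LIMSEQ_unique)
    show "(\<lambda>n. ennreal (hr z n x)) \<longlonglongrightarrow> (SUP n. ennreal (hr z n x))"
      by (rule LIMSEQ_SUP, rule incseq_SucI, rule ennreal_leI, rule hr_mono[OF x])
    show "(\<lambda>n. ennreal (hr z n x)) \<longlonglongrightarrow> ennreal (hl z x)"
      by (rule tendsto_ennrealI[OF hr_lim[OF z x]])
  qed
  finally show ?thesis .
qed

lemma recurrence:
  assumes z: "z \<in> S" and irr: "irreducible S lam"
    and U_nn: "\<And>x. x \<in> S \<Longrightarrow> 0 \<le> U x"
    and U_fin: "\<And>M. finite {x \<in> S. U x \<le> M}"
    and U_sup: "\<And>x. x \<in> S - {z} \<Longrightarrow> (\<Sum>y\<in>Y x - {z}. P x y * U y) \<le> U x"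
  shows "\<And>x. x \<in> S - {z} \<Longrightarrow> hl z x = 1"
proof (rule ccontr)
  fix x1 assume x1: "x1 \<in> S - {z}" and ne: "hl z x1 \<noteq> 1"
  define g0 where "g0 x = 1 - hl z x" for x
  have g0pos: "g0 x1 > 0" using hl_bounds[OF z, of x1] x1 ne by (auto simp: g0_def)
  have g0le: "g0 x \<le> 1" if "x \<in> S" for x using hl_bounds[OF z that] by (simp add: g0_def)
  have g0harm: "(\<Sum>y\<in>Y x - {z}. P x y * g0 y) = g0 x" if "x \<in> S" for x
  proof -
    have "(\<Sum>y\<in>Y x - {z}. P x y * g0 y) = (\<Sum>y\<in>Y x - {z}. P x y) - (\<Sum>y\<in>Y x - {z}. P x y * hl z y)"
      by (simp add: g0_def algebra_simps sum_subtractf)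
    also have "\<dots> = g0 x"
      using sumP_z[OF that z] hl_harm[OF z that] by (simp add: g0_def)
    finally show ?thesis .
  qed
  define M where "M = 2 * (U x1 + 1) / g0 x1"
  have Mpos: "M > 0" using g0pos U_nn[of x1] x1 by (simp add: M_def)
  define f where "f x = g0 x - U x / M" for x
  have fx1: "f x1 > 0"
  proof -
    have "U x1 / M = g0 x1 * U x1 / (2 * (U x1 + 1))" using g0pos by (simp add: M_def)
    also have "\<dots> < g0 x1"
    proof -
      have "U x1 < 2 * (U x1 + 1)" using U_nn[of x1] x1 by simp
      hence "U x1 / (2 * (U x1 + 1)) < 1" using U_nn[of x1] x1 by simp
      hence "g0 x1 * (U x1 / (2 * (U x1 + 1))) < g0 x1 * 1" by (rule mult_strict_left_mono) (rule g0pos)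
      thus ?thesis by simp
    qed
    finally show ?thesis by (simp add: f_def)
  qed
  define A where "A = {x \<in> S - {z}. f x1 \<le> f x}"
  have A_sub: "A \<subseteq> {x \<in> S. U x \<le> M}"
  proof
    fix x assume "x \<in> A"
    hence xs: "x \<in> S" and "f x > 0" using fx1 by (auto simp: A_def)
    hence "U x / M < g0 x" by (simp add: f_def)
    hence "U x / M < 1" using g0le[OF xs] by simp
    thus "x \<in> {x \<in> S. U x \<le> M}" using xs Mpos by simp
  qed
  have A_fin: "finite A" using finite_subset[OF A_sub U_fin] .
  have x1A: "x1 \<in> A" using x1 by (simp add: A_def)
  define mx where "mx = Max (f ` A)"
  have "mx \<in> f ` A" unfolding mx_def by (rule Max_in) (use A_fin x1A in auto)
  then obtain x0 where x0A: "x0 \<in> A" and fx0: "f x0 = mx" by auto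
  have x0max: "f x \<le> f x0" if "x \<in> A" for x
    unfolding fx0 mx_def by (rule Max_ge) (use A_fin that in auto)
  have fmax: "f x \<le> f x0" if "x \<in> S - {z}" for x
  proof (cases "x \<in> A")
    case True thus ?thesis by (rule x0max)
  next
    case False thus ?thesis using that x0max[OF x1A] by (auto simp: A_def)
  qed
  define m where "m = f x0"
  have mpos: "m > 0" using x0max[OF x1A] fx1 by (simp add: m_def)
  have key: "P w z = 0 \<and> (\<forall>y\<in>Y w - {z}. P w y > 0 \<longrightarrow> f y = m)"
    if w: "w \<in> S - {z}" "f w = m" for w
  proof -
    have wS: "w \<in> S" using w by auto
    have sub: "f w \<le> (\<Sum>y\<in>Y w - {z}. P w y * f y)"
    proof -
      have "(\<Sum>y\<in>Y w - {z}. P w y * f y) = (\<Sum>y\<in>Y w - {z}. P w y * g0 y) - (\<Sum>y\<in>Y w - {z}. P w y * U y) / M"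
        by (simp add: f_def algebra_simps sum_subtractf sum_divide_distrib)
      also have "\<dots> \<ge> g0 w - U w / M"
        using g0harm[OF wS] U_sup[OF w(1)] Mpos by (simp add: divide_right_mono)
      finally show ?thesis by (simp add: f_def)
    qed
    have le: "P w y * f y \<le> P w y * m" if "y \<in> Y w - {z}" for y
      using fmax[of y] that Y_sub P_nonneg[OF wS, of y] by (auto simp: m_def intro!: mult_left_mono)
    have "(\<Sum>y\<in>Y w - {z}. P w y * f y) \<le> (\<Sum>y\<in>Y w - {z}. P w y * m)"
      by (rule sum_mono[OF le])
    also have sm: "\<dots> = (1 - P w z) * m"
    proof -
      have "sum (P w) (Y w - {z}) = 1 - P w z" using sumP_z[OF wS z] by simp
      thus ?thesis by (simp add: sum_distrib_right[symmetric])
    qed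
    finally have 1: "m \<le> (1 - P w z) * m" using sub w by simp
    hence "P w z * m \<le> 0" by (simp add: algebra_simps)
    hence "P w z \<le> 0" using mpos by (simp add: mult_le_0_iff)
    hence Pz: "P w z = 0" using P_nonneg[OF wS, of z] by simp
    have "(\<Sum>y\<in>Y w - {z}. P w y * m - P w y * f y) = (\<Sum>y\<in>Y w - {z}. P w y * m) - (\<Sum>y\<in>Y w - {z}. P w y * f y)"
      by (simp add: sum_subtractf)
    also have "\<dots> \<le> 0" using sub w sm Pz by simp
    finally have s0: "(\<Sum>y\<in>Y w - {z}. P w y * m - P w y * f y) \<le> 0" .
    have nn: "\<forall>y\<in>Y w - {z}. 0 \<le> P w y * m - P w y * f y" using le by auto
    have "\<forall>y\<in>Y w - {z}. P w y * m - P w y * f y = 0"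
      using sum_nonneg_eq_0_iff[of "Y w - {z}" "\<lambda>y. P w y * m - P w y * f y"] nn s0 Y_finite
        sum_nonneg[of "Y w - {z}" "\<lambda>y. P w y * m - P w y * f y"] by auto
    have "\<forall>y\<in>Y w - {z}. P w y > 0 \<longrightarrow> f y = m"
    proof (intro ballI impI)
      fix y assume y: "y \<in> Y w - {z}" "P w y > 0"
      have "P w y * (m - f y) = 0" using \<open>\<forall>y\<in>Y w - {z}. P w y * m - P w y * f y = 0\<close> y(1)
        by (simp add: algebra_simps)
      thus "f y = m" using y(2) by simp
    qed
    with Pz show ?thesis by blast
  qed
  obtain ys where ys: "set ys \<subseteq> S" "last (x0 # ys) = z" "pos_path lam x0 ys"
    using irr x0A z unfolding irreducible_def A_def by blast
  have "last (w # ys) \<noteq> z" if "w \<in> S - {z}" "f w = m" "pos_path lam w ys" "set ys \<subseteq> S" for w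
    using that
  proof (induction ys arbitrary: w)
    case Nil thus ?case by simp
  next
    case (Cons y ys)
    have wS: "w \<in> S" using Cons.prems by auto
    have yS: "y \<in> S" using Cons.prems by auto
    have lp: "lam (int y - int w) w > 0" "y \<noteq> w" using Cons.prems by auto
    have "int y - int w \<in> \<Gamma>"
    proof (rule ccontr)
      assume "int y - int w \<notin> \<Gamma>"
      hence "lam (int y - int w) w = 0" using Gamma_supp wS by blast
      thus False using lp by simp
    qed
    hence yY: "y \<in> Y w" using yS lp by (simp add: Y_def)
    have Pp: "P w y > 0" using lp q_pos[OF wS] by (simp add: jump_prob_def)
    have k: "P w z = 0 \<and> (\<forall>y\<in>Y w - {z}. P w y > 0 \<longrightarrow> f y = m)" using key Cons.prems by blast
    have "y \<noteq> z" using k Pp by auto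
    hence "f y = m" using k yY Pp by auto
    hence "last (y # ys) \<noteq> z" using Cons.IH[of y] Cons.prems yS \<open>y \<noteq> z\<close> by auto
    thus ?case by simp
  qed
  thus False using ys x0A by (auto simp: A_def m_def)
qed

lemma finite_time:
  assumes z: "z \<in> S"
    and g_nn: "\<And>x. x \<in> S \<Longrightarrow> 0 \<le> g x"
    and g_sup: "\<And>x. x \<in> S - {z} \<Longrightarrow> 1 / q x + (\<Sum>y\<in>Y x - {z}. P x y * g y) \<le> g x"
  shows "x \<in> S \<Longrightarrow> kr z n x \<le> 1 / q x + (\<Sum>y\<in>Y x - {z}. P x y * g y)"
proof (induction n arbitrary: x)
  case 0
  have "\<forall>y\<in>Y x - {z}. 0 \<le> P x y * g y"
  proof
    fix y assume "y \<in> Y x - {z}"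
    hence "y \<in> S" using Y_sub by auto
    thus "0 \<le> P x y * g y" using g_nn P_nonneg[OF 0] by simp
  qed
  hence "0 \<le> (\<Sum>y\<in>Y x - {z}. P x y * g y)" by (intro sum_nonneg) auto
  thus ?case using q_pos[OF 0] by simp
next
  case (Suc n)
  have xS: "x \<in> S" by fact
  have le: "P x y / q x * hr z n y + P x y * kr z n y \<le> P x y / q x + P x y * g y"
    if "y \<in> Y x - {z}" for y
  proof -
    have yS: "y \<in> S" "y \<in> S - {z}" using that Y_sub by auto
    have "kr z n y \<le> g y" using Suc.IH[OF yS(1)] g_sup[OF yS(2)] by simp
    moreover have "hr z n y \<le> 1" using hr_le1[OF z yS(1)] .
    moreover have "0 \<le> P x y / q x" "0 \<le> P x y" using P_nonneg[OF xS] q_pos[OF xS] by auto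
    ultimately show ?thesis
      by (intro add_mono) (simp_all add: mult_left_mono mult_left_le[of "hr z n y" "P x y / q x", simplified])
  qed
  have "(\<Sum>y\<in>Y x - {z}. P x y / q x * hr z n y + P x y * kr z n y) \<le> (\<Sum>y\<in>Y x - {z}. P x y / q x + P x y * g y)"
    by (rule sum_mono[OF le])
  hence "kr z (Suc n) x \<le> P x z / q x + (\<Sum>y\<in>Y x - {z}. P x y / q x + P x y * g y)"
    by (simp only: kr.simps add_left_mono)
  also have "\<dots> = (P x z + (\<Sum>y\<in>Y x - {z}. P x y)) / q x + (\<Sum>y\<in>Y x - {z}. P x y * g y)"
    by (simp add: sum.distrib add_divide_distrib sum_divide_distrib)
  also have "\<dots> = 1 / q x + (\<Sum>y\<in>Y x - {z}. P x y * g y)" using sumP_z[OF xS z] by simp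
  finally show ?case .
qed

lemma ret_time_fin:
  assumes z: "z \<in> S"
    and g_nn: "\<And>x. x \<in> S \<Longrightarrow> 0 \<le> g x"
    and g_sup: "\<And>x. x \<in> S - {z} \<Longrightarrow> 1 / q x + (\<Sum>y\<in>Y x - {z}. P x y * g y) \<le> g x"
  shows "(\<integral>\<^sup>+ys. ennreal (path_prob \<Gamma> lam z ys * hold_time \<Gamma> lam z ys) \<partial>count_space (return_paths S z)) < \<infinity>"
proof -
  have "(\<integral>\<^sup>+ys. ennreal (path_prob \<Gamma> lam z ys * hold_time \<Gamma> lam z ys) \<partial>count_space (return_paths S z))
     = (SUP n. ennreal (kr z n z))"
    by (simp only: SUP_R kn_eq[OF z z])
  also have "\<dots> \<le> ennreal (1 / q z + (\<Sum>y\<in>Y z - {z}. P z y * g y))"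
    by (rule SUP_least, rule ennreal_leI, rule finite_time[OF z g_nn g_sup z])
  also have "\<dots> < \<infinity>" by simp
  finally show ?thesis .
qed

end

lemma finite_pos_choice:
  assumes "finite A" "\<forall>x\<in>A. \<exists>y. Q x y \<and> (0::real) < h x y"
  shows "\<exists>p>0. \<forall>x\<in>A. \<exists>y. Q x y \<and> p \<le> h x y"
  using assms
proof (induction A rule: finite_induct)
  case empty thus ?case by (auto intro: exI[of _ 1])
next
  case (insert a A)
  then obtain p where p: "p > 0" "\<forall>x\<in>A. \<exists>y. Q x y \<and> p \<le> h x y" by auto
  obtain y where y: "Q a y" "0 < h a y" using insert.prems by auto
  show ?case
    by (rule exI[of _ "min p (h a y)"]) (use p y in \<open>auto intro: order_trans[OF min.cobounded1]\<close>)
qed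

context mc begin

definition dd :: "nat \<Rightarrow> nat \<Rightarrow> nat" where
  "dd z x = (LEAST n. \<exists>ys. length ys = n \<and> set ys \<subseteq> S \<and> last (x # ys) = z \<and> pos_path lam x ys)"

lemma path_pos_bound:
  assumes G: "\<forall>\<eta>\<in>\<Gamma>. \<bar>\<eta>\<bar> \<le> int G"
  shows "x \<in> S \<Longrightarrow> set ys \<subseteq> S \<Longrightarrow> pos_path lam x ys \<Longrightarrow> x \<le> last (x # ys) + length ys * G"
proof (induction ys arbitrary: x)
  case Nil thus ?case by simp
next
  case (Cons y ys)
  have yS: "y \<in> S" using Cons.prems by auto
  have lp: "lam (int y - int x) x > 0" using Cons.prems by auto
  have "int y - int x \<in> \<Gamma>"
  proof (rule ccontr)
    assume "int y - int x \<notin> \<Gamma>"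
    hence "lam (int y - int x) x = 0" using Gamma_supp Cons.prems(1) by blast
    thus False using lp by simp
  qed
  hence "\<bar>int y - int x\<bar> \<le> int G" using G by blast
  hence "int x \<le> int y + int G" by linarith
  hence "x \<le> y + G" by linarith
  moreover have "y \<le> last (y # ys) + length ys * G" using Cons.IH[OF yS] Cons.prems by auto
  ultimately show ?case by simp
qed

lemma dd_props:
  assumes irr: "irreducible S lam" and z: "z \<in> S" and x: "x \<in> S"
  shows "\<exists>ys. length ys = dd z x \<and> set ys \<subseteq> S \<and> last (x # ys) = z \<and> pos_path lam x ys"
proof -
  have "\<exists>n ys. length ys = n \<and> set ys \<subseteq> S \<and> last (x # ys) = z \<and> pos_path lam x ys"
    using irr x z unfolding irreducible_def by blast
  thus ?thesis unfolding dd_def by (rule LeastI_ex)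
qed

lemma dd_le:
  "length ys = n \<Longrightarrow> set ys \<subseteq> S \<Longrightarrow> last (x # ys) = z \<Longrightarrow> pos_path lam x ys \<Longrightarrow> dd z x \<le> n"
  unfolding dd_def by (rule Least_le) blast

lemma dd_succ:
  assumes irr: "irreducible S lam" and z: "z \<in> S" and x: "x \<in> S" and xz: "x \<noteq> z"
  shows "\<exists>y. y \<in> Y x \<and> dd z y < dd z x \<and> 0 < P x y"
proof -
  obtain ys where ys: "length ys = dd z x" "set ys \<subseteq> S" "last (x # ys) = z" "pos_path lam x ys"
    using dd_props[OF irr z x] by blast
  have "ys \<noteq> []" using ys xz by auto
  then obtain y ys' where yy: "ys = y # ys'" by (cases ys) auto
  have yS: "y \<in> S" using ys yy by auto
  have lp: "lam (int y - int x) x > 0" "y \<noteq> x" using ys yy by auto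
  have "int y - int x \<in> \<Gamma>"
  proof (rule ccontr)
    assume "int y - int x \<notin> \<Gamma>"
    hence "lam (int y - int x) x = 0" using Gamma_supp x by blast
    thus False using lp by simp
  qed
  hence yY: "y \<in> Y x" using yS lp by (simp add: Y_def)
  have "dd z y \<le> length ys'"
    by (rule dd_le[OF refl]) (use ys yy in auto)
  hence "dd z y < dd z x" using ys(1) yy by simp
  moreover have "0 < P x y" using lp q_pos[OF x] by (simp add: jump_prob_def)
  ultimately show ?thesis using yY by blast
qed

lemma dd_zero: "dd z x = 0 \<Longrightarrow> irreducible S lam \<Longrightarrow> z \<in> S \<Longrightarrow> x \<in> S \<Longrightarrow> x = z"
  using dd_props[of z x] by auto

lemma P_le1: "x \<in> S \<Longrightarrow> P x y \<le> 1"
proof (cases "y \<in> Y x")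
  case True
  assume x: "x \<in> S"
  have "P x y \<le> (\<Sum>y\<in>Y x. P x y)"
    by (rule member_le_sum) (use True Y_finite P_nonneg[OF x] in auto)
  thus ?thesis using sumP[OF x] by simp
next
  case False
  assume x: "x \<in> S"
  thus ?thesis using P_zero[OF x False] by simp
qed

lemma W_exists:
  assumes irr: "irreducible S lam" and z: "z \<in> S" and F0: "finite F0" "F0 \<subseteq> S" and B: "0 \<le> B"
  shows "\<exists>W. (\<forall>x. 0 \<le> W x) \<and>
     (\<forall>x\<in>S - {z}. (\<Sum>y\<in>Y x. P x y * W y) \<le> W x - (if x \<in> F0 then B else 0))"
proof -
  obtain G where G: "\<forall>\<eta>\<in>\<Gamma>. \<bar>\<eta>\<bar> \<le> int G" using Gbound by blast
  define D where "D = Max (insert 0 (dd z ` F0))"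
  have dD: "dd z x \<le> D" if "x \<in> F0" for x
    unfolding D_def using F0 that by (intro Max_ge) auto
  define F where "F = {y \<in> S. dd z y \<le> D}"
  have F0F: "F0 \<subseteq> F" using F0 dD by (auto simp: F_def)
  have F_fin: "finite F"
  proof (rule finite_subset[of F "{..z + D * G}"])
    show "F \<subseteq> {..z + D * G}"
    proof
      fix y assume "y \<in> F"
      hence yS: "y \<in> S" and yD: "dd z y \<le> D" by (auto simp: F_def)
      obtain ys where ys: "length ys = dd z y" "set ys \<subseteq> S" "last (y # ys) = z" "pos_path lam y ys"
        using dd_props[OF irr z yS] by blast
      have "y \<le> z + dd z y * G" using path_pos_bound[OF G yS ys(2) ys(4)] ys by simp
      also have "\<dots> \<le> z + D * G" using yD by simp
      finally show "y \<in> {..z + D * G}" by simp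
    qed
  qed simp
  have "\<forall>x\<in>F - {z}. \<exists>y. (y \<in> Y x \<and> dd z y < dd z x) \<and> 0 < P x y"
  proof
    fix x assume "x \<in> F - {z}"
    hence xS: "x \<in> S" and "x \<noteq> z" by (auto simp: F_def)
    from dd_succ[OF irr z xS this(2)] show "\<exists>y. (y \<in> Y x \<and> dd z y < dd z x) \<and> 0 < P x y" by blast
  qed
  then obtain p0 where p0: "p0 > 0" "\<forall>x\<in>F - {z}. \<exists>y. (y \<in> Y x \<and> dd z y < dd z x) \<and> p0 \<le> P x y"
    using finite_pos_choice[of "F - {z}" "\<lambda>x y. y \<in> Y x \<and> dd z y < dd z x" "\<lambda>x y. P x y"] F_fin by auto
  define p where "p = min p0 1"
  have p: "0 < p" "p \<le> 1" using p0 by (auto simp: p_def)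
  have psucc: "\<forall>x\<in>F - {z}. \<exists>y. (y \<in> Y x \<and> dd z y < dd z x) \<and> p \<le> P x y"
  proof
    fix x assume "x \<in> F - {z}"
    then obtain y where "(y \<in> Y x \<and> dd z y < dd z x)" "p0 \<le> P x y" using p0(2) by blast
    moreover have "p \<le> p0" by (simp add: p_def)
    ultimately show "\<exists>y. (y \<in> Y x \<and> dd z y < dd z x) \<and> p \<le> P x y" by (meson order_trans)
  qed
  define \<theta> where "\<theta> = p / 2"
  have th: "0 < \<theta>" "\<theta> < 1" "\<theta> \<le> 1" using p by (auto simp: \<theta>_def)
  define C where "C = 2 * B / (p * \<theta> ^ D)"
  have C0: "0 \<le> C" using B p th by (simp add: C_def)
  have CB: "C * \<theta> ^ D * (p / 2) = B" using p th by (simp add: C_def field_simps)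
  define W where "W y = (if y \<in> F then C * (1 - \<theta> ^ dd z y) else C)" for y
  have W0: "0 \<le> W y" for y
  proof -
    have "\<theta> ^ dd z y \<le> 1" using th by (simp add: power_le_one)
    hence "0 \<le> C * (1 - \<theta> ^ dd z y)" using C0 by simp
    thus ?thesis using C0 by (simp add: W_def)
  qed
  have WC: "W y \<le> C" for y
  proof -
    have "0 \<le> \<theta> ^ dd z y" using th by simp
    hence "C * (1 - \<theta> ^ dd z y) \<le> C" using C0 by (simp add: algebra_simps)
    thus ?thesis by (simp add: W_def)
  qed
  have main: "(\<Sum>y\<in>Y x. P x y * W y) \<le> W x - (if x \<in> F0 then B else 0)" if x: "x \<in> S - {z}" for x
  proof (cases "x \<in> F")
    case False
    hence "x \<notin> F0" using F0F by auto
    have "(\<Sum>y\<in>Y x. P x y * W y) \<le> (\<Sum>y\<in>Y x. P x y * C)"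
      by (rule sum_mono, rule mult_left_mono[OF WC P_nonneg]) (use x in simp)
    also have "\<dots> = C" using sumP x by (simp add: sum_distrib_right[symmetric])
    finally show ?thesis using False \<open>x \<notin> F0\<close> by (simp add: W_def)
  next
    case True
    have xS: "x \<in> S" using x by auto
    obtain y0 where y0: "y0 \<in> Y x" "dd z y0 < dd z x" "p \<le> P x y0" using psucc True x by blast
    define k where "k = dd z x"
    have k1: "k \<ge> 1"
    proof (rule ccontr)
      assume "\<not> k \<ge> 1"
      hence "dd z x = 0" by (simp add: k_def)
      hence "x = z" by (rule dd_zero[OF _ irr z xS])
      thus False using x by simp
    qed
    have kD: "k \<le> D" using True by (simp add: F_def k_def)
    have "y0 \<in> S" using y0(1) Y_sub by blast
    moreover have "dd z y0 \<le> D" using y0(2) kD by (simp add: k_def)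
    ultimately have y0F: "y0 \<in> F" by (simp add: F_def)
    have "\<theta> ^ (k - 1) \<le> \<theta> ^ dd z y0"
      by (rule power_decreasing) (use y0 th in \<open>auto simp: k_def\<close>)
    hence Wy0: "W y0 \<le> C * (1 - \<theta> ^ (k - 1))"
      using y0F C0 by (simp add: W_def mult_left_mono)
    have "(\<Sum>y\<in>Y x. P x y * W y) = P x y0 * W y0 + (\<Sum>y\<in>Y x - {y0}. P x y * W y)"
      by (rule sum.remove[OF Y_finite y0(1)])
    also have "(\<Sum>y\<in>Y x - {y0}. P x y * W y) \<le> (\<Sum>y\<in>Y x - {y0}. P x y * C)"
      by (rule sum_mono, rule mult_left_mono[OF WC P_nonneg[OF xS]])
    also have "(\<Sum>y\<in>Y x - {y0}. P x y * C) = (1 - P x y0) * C"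
    proof -
      have "(\<Sum>y\<in>Y x - {y0}. P x y) = 1 - P x y0"
        using sum.remove[OF Y_finite y0(1), of "P x"] sumP[OF xS] by simp
      thus ?thesis by (simp add: sum_distrib_right[symmetric])
    qed
    finally have "(\<Sum>y\<in>Y x. P x y * W y) \<le> P x y0 * W y0 + (1 - P x y0) * C" by simp
    also have "\<dots> \<le> P x y0 * (C * (1 - \<theta> ^ (k - 1))) + (1 - P x y0) * C"
      using Wy0 P_nonneg[OF xS, of y0] by (simp add: mult_left_mono)
    also have "\<dots> = C - P x y0 * (C * \<theta> ^ (k - 1))" by (simp add: algebra_simps)
    also have "\<dots> \<le> C - p * (C * \<theta> ^ (k - 1))"
      using y0(3) C0 th by (simp add: mult_right_mono)
    also have "\<dots> \<le> W x - B"
    proof -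
      have Wx: "W x = C - C * \<theta> ^ k" using True by (simp add: W_def k_def algebra_simps)
      have tk: "\<theta> ^ k = \<theta> * \<theta> ^ (k - 1)" using k1 by (simp add: power_eq_if)
      have "\<theta> ^ D \<le> \<theta> ^ (k - 1)" by (rule power_decreasing) (use kD th in auto)
      hence "C * \<theta> ^ D * (p / 2) \<le> C * \<theta> ^ (k - 1) * (p / 2)"
        using C0 p by (simp add: mult_left_mono mult_right_mono)
      hence "B \<le> C * \<theta> ^ (k - 1) * (p / 2)" using CB by simp
      thus ?thesis unfolding Wx tk by (simp add: \<theta>_def algebra_simps)
    qed
    also have "\<dots> \<le> W x - (if x \<in> F0 then B else 0)" using B by simp
    finally show ?thesis .
  qed
  show ?thesis using W0 main by blast
qed

end

lemma taylor3:
  fixes f fd fdd fddd :: "real \<Rightarrow> real"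
  assumes d1: "\<And>t. a \<le> t \<Longrightarrow> t \<le> b \<Longrightarrow> (f has_real_derivative fd t) (at t)"
    and d2: "\<And>t. a \<le> t \<Longrightarrow> t \<le> b \<Longrightarrow> (fd has_real_derivative fdd t) (at t)"
    and d3: "\<And>t. a \<le> t \<Longrightarrow> t \<le> b \<Longrightarrow> (fdd has_real_derivative fddd t) (at t)"
    and bnd: "\<And>t. a \<le> t \<Longrightarrow> t \<le> b \<Longrightarrow> \<bar>fddd t\<bar> \<le> M"
    and ab: "a \<le> c" "c \<le> b" "a \<le> x" "x \<le> b"
  shows "f x - f c \<le> fd c * (x - c) + fdd c / 2 * (x - c)^2 + M / 6 * \<bar>x - c\<bar>^3"
proof (cases "x = c")
  case True thus ?thesis by simp
next
  case False
  define diff where "diff m = (if m = 0 then f else if m = 1 then fd else if m = 2 then fdd else fddd)" for m :: nat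
  have D: "\<forall>m t. m < 3 \<and> a \<le> t \<and> t \<le> b \<longrightarrow> DERIV (diff m) t :> diff (Suc m) t"
  proof (intro allI impI)
    fix m :: nat and t :: real assume h: "m < 3 \<and> a \<le> t \<and> t \<le> b"
    hence "m = 0 \<or> m = 1 \<or> m = 2" by auto
    thus "DERIV (diff m) t :> diff (Suc m) t" using h d1 d2 d3 by (auto simp: diff_def)
  qed
  obtain t where t: "(if x < c then x < t \<and> t < c else c < t \<and> t < x)"
    and eq: "f x = (\<Sum>m<3. (diff m c / fact m) * (x - c)^m) + (diff 3 t / fact 3) * (x - c)^3"
    using Taylor[of 3 diff f a b c x, OF _ _ D ab False] by (auto simp: diff_def)
  have tab: "a \<le> t" "t \<le> b" using t ab by (auto split: if_splits)
  have s: "(\<Sum>m<3. (diff m c / fact m) * (x - c)^m) = f c + fd c * (x - c) + fdd c / 2 * (x - c)^2"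
    by (simp add: diff_def numeral_3_eq_3 lessThan_Suc fact_numeral power2_eq_square)
  have "(diff 3 t / fact 3) * (x - c)^3 = fddd t / 6 * (x - c)^3"
    by (simp add: diff_def fact_numeral)
  also have "\<dots> \<le> \<bar>fddd t / 6 * (x - c)^3\<bar>" by simp
  also have "\<dots> = \<bar>fddd t\<bar> / 6 * \<bar>x - c\<bar>^3" by (simp add: abs_mult power_abs)
  also have "\<dots> \<le> M / 6 * \<bar>x - c\<bar>^3"
    using bnd[OF tab] by (intro mult_right_mono divide_right_mono) auto
  finally show ?thesis using eq s by simp
qed

lemma powr_derivs:
  fixes \<alpha> t :: real assumes t: "t > 0"
  shows "((\<lambda>t. t powr \<alpha> / \<alpha>) has_real_derivative (if \<alpha> = 0 then 0 else t powr (\<alpha> - 1))) (at t)"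
    and "((\<lambda>t. t powr (\<alpha> - 1)) has_real_derivative (\<alpha> - 1) * t powr (\<alpha> - 2)) (at t)"
    and "((\<lambda>t. (\<alpha> - 1) * t powr (\<alpha> - 2)) has_real_derivative (\<alpha> - 1) * (\<alpha> - 2) * t powr (\<alpha> - 3)) (at t)"
proof -
  show "((\<lambda>t. t powr \<alpha> / \<alpha>) has_real_derivative (if \<alpha> = 0 then 0 else t powr (\<alpha> - 1))) (at t)"
    using has_real_derivative_powr[OF t, of \<alpha>] t by (auto intro!: derivative_eq_intros)
  show "((\<lambda>t. t powr (\<alpha> - 1)) has_real_derivative (\<alpha> - 1) * t powr (\<alpha> - 2)) (at t)"
    using has_real_derivative_powr[OF t, of "\<alpha> - 1"] by (simp add: algebra_simps)
  show "((\<lambda>t. (\<alpha> - 1) * t powr (\<alpha> - 2)) has_real_derivative (\<alpha> - 1) * (\<alpha> - 2) * t powr (\<alpha> - 3)) (at t)"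
    using DERIV_cmult[OF has_real_derivative_powr[OF t, of "\<alpha> - 2"], of "\<alpha> - 1"] by (simp add: algebra_simps)
qed

lemma lnln_derivs:
  fixes t :: real assumes t: "t > 1"
  shows "((\<lambda>t. ln (ln t)) has_real_derivative 1 / (t * ln t)) (at t)"
    and "((\<lambda>t. 1 / (t * ln t)) has_real_derivative - (ln t + 1) / (t^2 * (ln t)^2)) (at t)"
    and "((\<lambda>t. - (ln t + 1) / (t^2 * (ln t)^2)) has_real_derivative (2 * (ln t)^2 + 3 * ln t + 2) / (t^3 * (ln t)^3)) (at t)"
proof -
  have t0: "t > 0" and l: "ln t > 0" using t by auto
  show "((\<lambda>t. ln (ln t)) has_real_derivative 1 / (t * ln t)) (at t)"
    using t0 l by (auto intro!: derivative_eq_intros simp: field_simps)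
  show "((\<lambda>t. 1 / (t * ln t)) has_real_derivative - (ln t + 1) / (t^2 * (ln t)^2)) (at t)"
    using t0 l by (auto intro!: derivative_eq_intros simp: field_simps power2_eq_square)
  show "((\<lambda>t. - (ln t + 1) / (t^2 * (ln t)^2)) has_real_derivative (2 * (ln t)^2 + 3 * ln t + 2) / (t^3 * (ln t)^3)) (at t)"
    using t0 l by (auto intro!: derivative_eq_intros simp: field_simps power2_eq_square power3_eq_cube)
qed

lemma powr_interval:
  fixes x t \<beta> :: real
  assumes x: "0 < x" and t: "x / 2 \<le> t" "t \<le> 2 * x"
  shows "t powr \<beta> \<le> 2 powr \<bar>\<beta>\<bar> * x powr \<beta>"
proof (cases "\<beta> \<ge> 0")
  case True
  have "t powr \<beta> \<le> (2 * x) powr \<beta>" using t x True by (intro powr_mono2) auto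
  also have "\<dots> = 2 powr \<bar>\<beta>\<bar> * x powr \<beta>" using True x by (simp add: powr_mult)
  finally show ?thesis .
next
  case False
  have "t powr \<beta> \<le> (x / 2) powr \<beta>" using t x False by (intro powr_mono2') auto
  also have "\<dots> = x powr \<beta> / 2 powr \<beta>" using x by (simp add: powr_divide)
  also have "2 powr \<bar>\<beta>\<bar> = inverse (2 powr \<beta>)"
  proof -
    have "2 powr \<bar>\<beta>\<bar> = 2 powr (- \<beta>)" using False by simp
    also have "\<dots> = inverse (2 powr \<beta>)" by (rule powr_minus)
    finally show ?thesis .
  qed
  hence "x powr \<beta> / 2 powr \<beta> = 2 powr \<bar>\<beta>\<bar> * x powr \<beta>" by (simp add: divide_inverse mult.commute)
  finally show ?thesis .
qed

lemma powr_f3_bound: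
  fixes x t \<alpha> :: real
  assumes x: "0 < x" and t: "x / 2 \<le> t" "t \<le> 2 * x"
  shows "\<bar>(\<alpha> - 1) * (\<alpha> - 2) * t powr (\<alpha> - 3)\<bar> \<le> \<bar>(\<alpha> - 1) * (\<alpha> - 2)\<bar> * 2 powr \<bar>\<alpha> - 3\<bar> * x powr (\<alpha> - 3)"
proof -
  have "\<bar>(\<alpha> - 1) * (\<alpha> - 2) * t powr (\<alpha> - 3)\<bar> = \<bar>(\<alpha> - 1) * (\<alpha> - 2)\<bar> * t powr (\<alpha> - 3)"
    by (simp add: abs_mult)
  also have "\<dots> \<le> \<bar>(\<alpha> - 1) * (\<alpha> - 2)\<bar> * (2 powr \<bar>\<alpha> - 3\<bar> * x powr (\<alpha> - 3))"
    by (intro mult_left_mono powr_interval[OF x t]) auto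
  finally show ?thesis by (simp add: mult.assoc)
qed

lemma lnln_f3_bound:
  fixes x t :: real
  assumes x: "8 \<le> x" and t: "x / 2 \<le> t" "t \<le> 2 * x"
  shows "\<bar>(2 * (ln t)^2 + 3 * ln t + 2) / (t^3 * (ln t)^3)\<bar> \<le> 112 / (x^3 * ln x)"
proof -
  have t0: "t > 0" using x t by auto
  have "ln (x / 2) \<ge> 1"
  proof -
    have e: "exp 1 \<le> x / 2" using exp_le x by linarith
    have "ln (exp 1) \<le> ln (x / 2)" using e x by (subst ln_le_cancel_iff) auto
    thus ?thesis by simp
  qed
  moreover have "ln (x / 2) \<le> ln t" using t x by simp
  ultimately have L1: "ln t \<ge> 1" by linarith
  have Lx: "ln x \<le> 2 * ln t"
  proof -
    have "x * 4 \<le> x * x" using x by (intro mult_left_mono) auto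
    hence "x \<le> (x / 2) * (x / 2)" by simp
    also have "\<dots> \<le> t * t" using t x by (intro mult_mono) auto
    finally have "ln x \<le> ln (t * t)" using x t0 by simp
    thus ?thesis using t0 by (simp add: ln_mult)
  qed
  have lx0: "ln x > 0" using x by simp
  have "ln t * 1 \<le> ln t * ln t" using L1 by (intro mult_left_mono) auto
  hence "ln t \<le> ln t * ln t" by simp
  hence num: "2 * (ln t)^2 + 3 * ln t + 2 \<le> 7 * (ln t)^2" unfolding power2_eq_square using L1 by linarith
  have "0 \<le> (ln t)^2" by simp
  hence n0: "0 < 2 * (ln t)^2 + 3 * ln t + 2" using L1 by linarith
  have lt0: "0 < ln t" using L1 by linarith
  hence d0: "0 < t^3 * (ln t)^3" using t0 by simp
  have pos: "0 < (2 * (ln t)^2 + 3 * ln t + 2) / (t^3 * (ln t)^3)" using n0 d0 by (rule divide_pos_pos)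
  have "(2 * (ln t)^2 + 3 * ln t + 2) / (t^3 * (ln t)^3) \<le> 7 * (ln t)^2 / (t^3 * (ln t)^3)"
    using num d0 by (intro divide_right_mono) auto
  also have "\<dots> = 7 / (t^3 * ln t)" using L1 by (simp add: power2_eq_square power3_eq_cube)
  also have "\<dots> \<le> 7 / ((x / 2)^3 * (ln x / 2))"
  proof (rule divide_left_mono)
    have "(x / 2)^3 \<le> t^3" using t x by (intro power_mono) auto
    moreover have "ln x / 2 \<le> ln t" using Lx by simp
    ultimately show "(x / 2)^3 * (ln x / 2) \<le> t^3 * ln t"
      using lx0 x t0 by (intro mult_mono) auto
    have "0 < t^3 * ln t" using t0 lt0 by simp
    moreover have "0 < (x / 2)^3 * (ln x / 2)" using lx0 x by simp
    ultimately show "0 < t^3 * ln t * ((x / 2)^3 * (ln x / 2))" by (rule mult_pos_pos)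
  qed simp
  also have "\<dots> = 112 / (x^3 * ln x)" by (simp add: field_simps)
  finally show ?thesis using pos by simp
qed

context mc begin

lemma Lg_bound:
  assumes x: "x \<in> S" and G: "\<forall>\<eta>\<in>\<Gamma>. \<bar>\<eta>\<bar> \<le> int G" and M0: "0 \<le> Mx"
    and h: "\<And>\<eta>. \<eta> \<in> \<Gamma> \<Longrightarrow> V (nat (int x + \<eta>)) - V x
             \<le> a1 * real_of_int \<eta> + a2 / 2 * (real_of_int \<eta>)^2 + Mx / 6 * \<bar>real_of_int \<eta>\<bar>^3"
  shows "Lg V x \<le> a1 * drift \<Gamma> lam x + a2 * diffu \<Gamma> lam x + Mx * G / 3 * diffu \<Gamma> lam x"
proof -
  have lnn: "0 \<le> lam \<eta> x" for \<eta> using rates_nonneg x by auto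
  have s1: "Lg V x \<le> (\<Sum>\<eta>\<in>\<Gamma>. lam \<eta> x * (a1 * real_of_int \<eta> + a2 / 2 * (real_of_int \<eta>)^2 + Mx / 6 * \<bar>real_of_int \<eta>\<bar>^3))"
    unfolding Lg_def by (rule sum_mono, rule mult_left_mono[OF h lnn])
  have s2: "(\<Sum>\<eta>\<in>\<Gamma>. lam \<eta> x * (a1 * real_of_int \<eta> + a2 / 2 * (real_of_int \<eta>)^2 + Mx / 6 * \<bar>real_of_int \<eta>\<bar>^3)) = a1 * drift \<Gamma> lam x + a2 * diffu \<Gamma> lam x + Mx / 6 * (\<Sum>\<eta>\<in>\<Gamma>. lam \<eta> x * \<bar>real_of_int \<eta>\<bar>^3)"
    by (simp add: drift_def diffu_def algebra_simps sum.distrib sum_distrib_left)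
  have s3: "(\<Sum>\<eta>\<in>\<Gamma>. lam \<eta> x * \<bar>real_of_int \<eta>\<bar>^3) \<le> (\<Sum>\<eta>\<in>\<Gamma>. real G * ((real_of_int \<eta>)^2 * lam \<eta> x))"
  proof (rule sum_mono)
    fix \<eta> assume e: "\<eta> \<in> \<Gamma>"
    have "\<bar>real_of_int \<eta>\<bar> \<le> real G" using G e by (metis of_int_abs of_int_le_iff of_int_of_nat_eq)
    moreover have "\<bar>real_of_int \<eta>\<bar>^3 = \<bar>real_of_int \<eta>\<bar> * (real_of_int \<eta>)^2"
      by (simp add: power3_eq_cube power2_eq_square)
    ultimately have "\<bar>real_of_int \<eta>\<bar>^3 \<le> real G * (real_of_int \<eta>)^2"
      by (simp add: mult_right_mono)
    hence "lam \<eta> x * \<bar>real_of_int \<eta>\<bar>^3 \<le> lam \<eta> x * (real G * (real_of_int \<eta>)^2)"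
      by (rule mult_left_mono) (rule lnn)
    thus "lam \<eta> x * \<bar>real_of_int \<eta>\<bar>^3 \<le> real G * ((real_of_int \<eta>)^2 * lam \<eta> x)"
      by (simp add: algebra_simps)
  qed
  have s4: "(\<Sum>\<eta>\<in>\<Gamma>. real G * ((real_of_int \<eta>)^2 * lam \<eta> x)) = 2 * G * diffu \<Gamma> lam x"
    by (simp add: diffu_def sum_distrib_left)
  have "Mx / 6 * (\<Sum>\<eta>\<in>\<Gamma>. lam \<eta> x * \<bar>real_of_int \<eta>\<bar>^3) \<le> Mx / 6 * (2 * G * diffu \<Gamma> lam x)"
    using s3 s4 M0 by (intro mult_left_mono) auto
  thus ?thesis using s1 s2 by simp
qed

end

lemma powr_shift_nonneg:
  fixes t \<alpha> :: real assumes "1 \<le> t" "\<alpha> \<noteq> 0"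
  shows "0 \<le> (t powr \<alpha> - 1) / \<alpha>"
proof (cases "\<alpha> > 0")
  case True
  have "1 \<le> t powr \<alpha>" using assms True by (simp add: ge_one_powr_ge_zero)
  thus ?thesis using True by simp
next
  case False
  hence "\<alpha> < 0" using assms by simp
  have "t powr \<alpha> \<le> t powr 0" using assms \<open>\<alpha> < 0\<close> by (intro powr_mono) auto
  hence "t powr \<alpha> \<le> 1" using assms by simp
  thus ?thesis using \<open>\<alpha> < 0\<close> by (intro divide_nonpos_neg) auto
qed

context mc begin

lemma nat_shift: "int x + \<eta> \<ge> 0 \<Longrightarrow> real (nat (int x + \<eta>)) = real x + real_of_int \<eta>"
  by (metis of_int_of_nat_eq of_int_add nat_0_le)

definition Vp :: "real \<Rightarrow> nat \<Rightarrow> real" where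
  "Vp \<alpha> y = max 0 ((real y powr \<alpha> - 1) / \<alpha>)"

lemma power_Lg:
  assumes a0: "\<alpha> \<noteq> 0" and G: "\<forall>\<eta>\<in>\<Gamma>. \<bar>\<eta>\<bar> \<le> int G" and x: "x \<in> S" and xG: "real x \<ge> 2 * G + 2"
  shows "Lg (Vp \<alpha>) x \<le> real x powr (\<alpha> - 2) * (drift \<Gamma> lam x * real x + (\<alpha> - 1) * diffu \<Gamma> lam x)
     + (\<bar>(\<alpha> - 1) * (\<alpha> - 2)\<bar> * 2 powr \<bar>\<alpha> - 3\<bar>) * real x powr (\<alpha> - 3) * G / 3 * diffu \<Gamma> lam x"
proof -
  define X where "X = real x"
  define K where "K = \<bar>(\<alpha> - 1) * (\<alpha> - 2)\<bar> * 2 powr \<bar>\<alpha> - 3\<bar>"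
  have X1: "X \<ge> 1" "X > 0" using xG by (auto simp: X_def)
  have K0: "0 \<le> K" by (simp add: K_def)
  have VX: "Vp \<alpha> x = (X powr \<alpha> - 1) / \<alpha>"
    using powr_shift_nonneg[OF X1(1) a0] by (simp add: Vp_def X_def)
  have step: "Vp \<alpha> (nat (int x + \<eta>)) - Vp \<alpha> x
      \<le> X powr (\<alpha> - 1) * real_of_int \<eta> + (\<alpha> - 1) * X powr (\<alpha> - 2) / 2 * (real_of_int \<eta>)^2
         + K * X powr (\<alpha> - 3) / 6 * \<bar>real_of_int \<eta>\<bar>^3" if e: "\<eta> \<in> \<Gamma>" for \<eta>
  proof -
    have eb: "\<bar>real_of_int \<eta>\<bar> \<le> real G" using G e by (metis of_int_abs of_int_le_iff of_int_of_nat_eq)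
    define t where "t = X + real_of_int \<eta>"
    have t_lo: "X / 2 \<le> t" "1 \<le> t" using eb xG by (auto simp: t_def X_def)
    have t_hi: "t \<le> 2 * X" using eb xG by (auto simp: t_def X_def)
    have "int x + \<eta> \<ge> 0" using t_lo by (simp add: t_def X_def)
    hence rt: "real (nat (int x + \<eta>)) = t" using nat_shift by (simp add: t_def X_def)
    have Vt: "Vp \<alpha> (nat (int x + \<eta>)) = (t powr \<alpha> - 1) / \<alpha>"
      using powr_shift_nonneg[OF t_lo(2) a0] rt by (simp add: Vp_def)
    have diffeq: "Vp \<alpha> (nat (int x + \<eta>)) - Vp \<alpha> x = t powr \<alpha> / \<alpha> - X powr \<alpha> / \<alpha>"
      unfolding Vt VX by (simp add: diff_divide_distrib)
    have T: "t powr \<alpha> / \<alpha> - X powr \<alpha> / \<alpha> \<le> X powr (\<alpha> - 1) * (t - X) + (\<alpha> - 1) * X powr (\<alpha> - 2) / 2 * (t - X)^2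
          + K * X powr (\<alpha> - 3) / 6 * \<bar>t - X\<bar>^3"
    proof (rule taylor3[where a = "X / 2" and b = "2 * X" and f = "\<lambda>t. t powr \<alpha> / \<alpha>"
          and fd = "\<lambda>t. t powr (\<alpha> - 1)" and fdd = "\<lambda>t. (\<alpha> - 1) * t powr (\<alpha> - 2)"
          and fddd = "\<lambda>t. (\<alpha> - 1) * (\<alpha> - 2) * t powr (\<alpha> - 3)"])
      fix s assume s: "X / 2 \<le> s" "s \<le> 2 * X"
      hence s0: "s > 0" using X1 by simp
      show "((\<lambda>t. t powr \<alpha> / \<alpha>) has_real_derivative s powr (\<alpha> - 1)) (at s)"
        using powr_derivs(1)[OF s0, of \<alpha>] a0 by simp
      show "((\<lambda>t. t powr (\<alpha> - 1)) has_real_derivative (\<alpha> - 1) * s powr (\<alpha> - 2)) (at s)"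
        by (rule powr_derivs(2)[OF s0])
      show "((\<lambda>t. (\<alpha> - 1) * t powr (\<alpha> - 2)) has_real_derivative (\<alpha> - 1) * (\<alpha> - 2) * s powr (\<alpha> - 3)) (at s)"
        by (rule powr_derivs(3)[OF s0])
      show "\<bar>(\<alpha> - 1) * (\<alpha> - 2) * s powr (\<alpha> - 3)\<bar> \<le> K * X powr (\<alpha> - 3)"
        unfolding K_def by (rule powr_f3_bound[OF X1(2) s])
    qed (use X1 t_lo t_hi in auto)
    have "t - X = real_of_int \<eta>" by (simp add: t_def)
    thus ?thesis using T diffeq by simp
  qed
  have "Lg (Vp \<alpha>) x \<le> X powr (\<alpha> - 1) * drift \<Gamma> lam x + (\<alpha> - 1) * X powr (\<alpha> - 2) * diffu \<Gamma> lam x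
        + K * X powr (\<alpha> - 3) * G / 3 * diffu \<Gamma> lam x"
    by (rule Lg_bound[OF x G _ step]) (use K0 in simp)
  also have "X powr (\<alpha> - 1) = X powr (\<alpha> - 2) * X"
  proof -
    have "X powr (\<alpha> - 1) = X powr ((\<alpha> - 2) + 1)" by simp
    also have "\<dots> = X powr (\<alpha> - 2) * X powr 1" by (rule powr_add)
    also have "X powr 1 = X" using X1 by simp
    finally show ?thesis .
  qed
  finally show ?thesis by (simp add: X_def K_def algebra_simps)
qed

definition Ull :: "nat \<Rightarrow> real" where
  "Ull y = (if 3 \<le> y then ln (ln (real y)) else 0)"

lemma lnln_Lg:
  assumes G: "\<forall>\<eta>\<in>\<Gamma>. \<bar>\<eta>\<bar> \<le> int G" and x: "x \<in> S" and xG: "real x \<ge> 2 * G + 8"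
  shows "Lg Ull x \<le> 1 / (real x * ln (real x)) * drift \<Gamma> lam x
      + (- (ln (real x) + 1) / ((real x)^2 * (ln (real x))^2)) * diffu \<Gamma> lam x
      + 112 / ((real x)^3 * ln (real x)) * G / 3 * diffu \<Gamma> lam x"
proof -
  define X where "X = real x"
  have X8: "X \<ge> 8" "X > 1" using xG by (auto simp: X_def)
  have lX: "ln X > 0" using X8 by simp
  have M0: "0 \<le> 112 / (X^3 * ln X)" using X8 lX by simp
  have step: "Ull (nat (int x + \<eta>)) - Ull x
      \<le> 1 / (X * ln X) * real_of_int \<eta> + (- (ln X + 1) / (X^2 * (ln X)^2)) / 2 * (real_of_int \<eta>)^2
         + 112 / (X^3 * ln X) / 6 * \<bar>real_of_int \<eta>\<bar>^3" if e: "\<eta> \<in> \<Gamma>" for \<eta>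
  proof -
    have eb: "\<bar>real_of_int \<eta>\<bar> \<le> real G" using G e by (metis of_int_abs of_int_le_iff of_int_of_nat_eq)
    define t where "t = X + real_of_int \<eta>"
    have t_lo: "X / 2 \<le> t" "3 \<le> t" using eb xG by (auto simp: t_def X_def)
    have t_hi: "t \<le> 2 * X" using eb xG by (auto simp: t_def X_def)
    have "int x + \<eta> \<ge> 0" using t_lo by (simp add: t_def X_def)
    hence rt: "real (nat (int x + \<eta>)) = t" using nat_shift by (simp add: t_def X_def)
    have "3 \<le> nat (int x + \<eta>)" using rt t_lo by linarith
    hence Ut: "Ull (nat (int x + \<eta>)) = ln (ln t)" using rt by (simp add: Ull_def)
    have "3 \<le> x" using X8 by (simp add: X_def)
    hence UX: "Ull x = ln (ln X)" by (simp add: Ull_def X_def)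
    have T: "ln (ln t) - ln (ln X) \<le> 1 / (X * ln X) * (t - X) + (- (ln X + 1) / (X^2 * (ln X)^2)) / 2 * (t - X)^2
          + 112 / (X^3 * ln X) / 6 * \<bar>t - X\<bar>^3"
    proof (rule taylor3[where a = "X / 2" and b = "2 * X" and f = "\<lambda>t. ln (ln t)"
          and fd = "\<lambda>t. 1 / (t * ln t)" and fdd = "\<lambda>t. - (ln t + 1) / (t^2 * (ln t)^2)"
          and fddd = "\<lambda>t. (2 * (ln t)^2 + 3 * ln t + 2) / (t^3 * (ln t)^3)"])
      fix s assume s: "X / 2 \<le> s" "s \<le> 2 * X"
      hence s1: "s > 1" using X8 by simp
      show "((\<lambda>t. ln (ln t)) has_real_derivative 1 / (s * ln s)) (at s)" by (rule lnln_derivs(1)[OF s1])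
      show "((\<lambda>t. 1 / (t * ln t)) has_real_derivative - (ln s + 1) / (s^2 * (ln s)^2)) (at s)" by (rule lnln_derivs(2)[OF s1])
      show "((\<lambda>t. - (ln t + 1) / (t^2 * (ln t)^2)) has_real_derivative (2 * (ln s)^2 + 3 * ln s + 2) / (s^3 * (ln s)^3)) (at s)"
        by (rule lnln_derivs(3)[OF s1])
      show "\<bar>(2 * (ln s)^2 + 3 * ln s + 2) / (s^3 * (ln s)^3)\<bar> \<le> 112 / (X^3 * ln X)"
        by (rule lnln_f3_bound[OF X8(1) s])
    qed (use X8 t_lo t_hi in auto)
    have "t - X = real_of_int \<eta>" by (simp add: t_def)
    thus ?thesis using T Ut UX by simp
  qed
  have "Lg Ull x \<le> 1 / (X * ln X) * drift \<Gamma> lam x + (- (ln X + 1) / (X^2 * (ln X)^2)) * diffu \<Gamma> lam x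
        + 112 / (X^3 * ln X) * G / 3 * diffu \<Gamma> lam x"
    by (rule Lg_bound[OF x G M0 step])
  thus ?thesis by (simp only: X_def)
qed

end

context mc begin

lemma Lg_scale: "Lg (\<lambda>y. c * f y) x = c * Lg f x"
  unfolding Lg_def by (simp add: sum_distrib_left algebra_simps)

lemma V_final:
  assumes a0: "\<alpha> \<noteq> 0" and d0: "\<delta> > 0" and C0: "C0 > 0" and ac: "\<alpha> - 2 + c \<ge> 0"
    and ev: "\<forall>x\<in>S. x \<ge> N \<longrightarrow> Jfun \<Gamma> lam x < 1 - \<alpha> - \<delta> \<and> real x powr c \<le> C0 * diffu \<Gamma> lam x"
  shows "\<exists>V N'. (\<forall>y. 0 \<le> V y) \<and> (\<forall>x\<in>S. x \<ge> N' \<longrightarrow> Lg V x \<le> -1)"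
proof -
  obtain G where G: "\<forall>\<eta>\<in>\<Gamma>. \<bar>\<eta>\<bar> \<le> int G" using Gbound by blast
  define K where "K = \<bar>(\<alpha> - 1) * (\<alpha> - 2)\<bar> * 2 powr \<bar>\<alpha> - 3\<bar>"
  have K0: "K \<ge> 0" by (simp add: K_def)
  define N' where "N' = max N (nat \<lceil>2 * G + 2 + 2 * K * G / (3 * \<delta>)\<rceil>)"
  have main: "Lg (Vp \<alpha>) x \<le> - (\<delta> / (2 * C0))" if x: "x \<in> S" "x \<ge> N'" for x
  proof -
    define X where "X = real x"
    define v where "v = diffu \<Gamma> lam x"
    define m where "m = drift \<Gamma> lam x"
    define J where "J = Jfun \<Gamma> lam x"
    have v0: "v > 0" using v_pos x by (simp add: v_def)
    have XN: "X \<ge> 2 * G + 2 + 2 * K * G / (3 * \<delta>)"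
      using x(2) unfolding N'_def X_def by linarith
    have KG0: "0 \<le> 2 * K * G / (3 * \<delta>)" using K0 d0 by simp
    have X2: "X \<ge> 2 * G + 2" using XN KG0 by linarith
    have X1: "X \<ge> 1" "X > 0" using X2 by auto
    have XK: "K * G / (3 * X) \<le> \<delta> / 2"
    proof -
      have "2 * K * G / (3 * \<delta>) \<le> X" using XN by linarith
      hence "2 * K * G \<le> X * (3 * \<delta>)" using d0 by (simp add: divide_le_eq)
      thus ?thesis using X1 by (simp add: divide_le_eq field_simps)
    qed
    have Jx: "J < 1 - \<alpha> - \<delta>" and vc: "X powr c \<le> C0 * v"
      using ev x N'_def by (auto simp: J_def X_def v_def)
    have mJ: "m * X = J * v" using v0 by (simp add: J_def Jfun_def m_def X_def v_def)
    have p3: "X powr (\<alpha> - 3) = X powr (\<alpha> - 2) / X"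
    proof -
      have "X powr (\<alpha> - 2) = X powr ((\<alpha> - 3) + 1)" by simp
      also have "\<dots> = X powr (\<alpha> - 3) * X powr 1" by (rule powr_add)
      also have "X powr 1 = X" using X1 by simp
      finally show ?thesis using X1 by simp
    qed
    have PL: "Lg (Vp \<alpha>) x \<le> X powr (\<alpha> - 2) * (m * X + (\<alpha> - 1) * v) + K * X powr (\<alpha> - 3) * G / 3 * v"
      using power_Lg[OF a0 G x(1)] X2 by (simp add: X_def K_def m_def v_def)
    also have "\<dots> = X powr (\<alpha> - 2) * v * (J + \<alpha> - 1 + K * G / (3 * X))"
      unfolding mJ p3 using X1 by (simp add: field_simps)
    also have "\<dots> \<le> X powr (\<alpha> - 2) * v * (- \<delta> / 2)"
    proof (rule mult_left_mono)
      show "J + \<alpha> - 1 + K * G / (3 * X) \<le> - \<delta> / 2" using Jx XK by linarith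
      show "0 \<le> X powr (\<alpha> - 2) * v" using v0 by simp
    qed
    also have "\<dots> \<le> (1 / C0) * (- \<delta> / 2)"
    proof (rule mult_right_mono_neg)
      have "X powr (\<alpha> - 2) * (X powr c) \<le> X powr (\<alpha> - 2) * (C0 * v)"
        using vc by (intro mult_left_mono) auto
      moreover have "X powr (\<alpha> - 2) * X powr c = X powr (\<alpha> - 2 + c)" by (simp add: powr_add)
      moreover have "1 \<le> X powr (\<alpha> - 2 + c)" using X1 ac by (simp add: ge_one_powr_ge_zero)
      ultimately have "1 \<le> C0 * (X powr (\<alpha> - 2) * v)" by (simp add: algebra_simps)
      thus "1 / C0 \<le> X powr (\<alpha> - 2) * v" using C0 by (simp add: divide_le_eq algebra_simps)
      show "- \<delta> / 2 \<le> 0" using d0 by simp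
    qed
    finally show ?thesis by simp
  qed
  define V where "V y = (2 * C0 / \<delta>) * Vp \<alpha> y" for y
  have "\<forall>y. 0 \<le> V y" using C0 d0 by (simp add: V_def Vp_def)
  moreover have "\<forall>x\<in>S. x \<ge> N' \<longrightarrow> Lg V x \<le> -1"
  proof (intro ballI impI)
    fix x assume "x \<in> S" "x \<ge> N'"
    have "Lg V x = (2 * C0 / \<delta>) * Lg (Vp \<alpha>) x" unfolding V_def by (rule Lg_scale)
    also have "\<dots> \<le> (2 * C0 / \<delta>) * (- (\<delta> / (2 * C0)))"
      using main[OF \<open>x \<in> S\<close> \<open>x \<ge> N'\<close>] C0 d0 by (intro mult_left_mono) auto
    also have "\<dots> = -1" using C0 d0 by simp
    finally show "Lg V x \<le> -1" .
  qed
  ultimately show ?thesis by blast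
qed

lemma U_final:
  assumes h1: "h < 1"
    and ev: "\<forall>x\<in>S. x \<ge> N \<longrightarrow> ln (real x) * (Jfun \<Gamma> lam x - 1) < h"
  shows "\<exists>N'. \<forall>x\<in>S. x \<ge> N' \<longrightarrow> Lg Ull x \<le> 0"
proof -
  obtain G where G: "\<forall>\<eta>\<in>\<Gamma>. \<bar>\<eta>\<bar> \<le> int G" using Gbound by blast
  define \<epsilon> where "\<epsilon> = 3 * (1 - h) / (112 * G + 3)"
  have e0: "\<epsilon> > 0" using h1 by (simp add: \<epsilon>_def)
  have "(\<lambda>n. ln (real n) / real n) \<longlonglongrightarrow> 0" by real_asymp
  hence "eventually (\<lambda>n. ln (real n) / real n < \<epsilon>) sequentially"
    using e0 by (rule order_tendstoD)
  then obtain N1 where N1: "\<And>n. n \<ge> N1 \<Longrightarrow> ln (real n) / real n < \<epsilon>"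
    by (auto simp: eventually_sequentially)
  define N' where "N' = max (max N N1) (2 * G + 8)"
  have "Lg Ull x \<le> 0" if x: "x \<in> S" "x \<ge> N'" for x
  proof -
    define X where "X = real x"
    define L where "L = ln X"
    define v where "v = diffu \<Gamma> lam x"
    define m where "m = drift \<Gamma> lam x"
    define J where "J = Jfun \<Gamma> lam x"
    have v0: "v > 0" using v_pos x by (simp add: v_def)
    have X8: "X \<ge> 2 * G + 8" using x(2) by (simp add: N'_def X_def)
    hence X1: "X > 1" by simp
    have L0: "L > 0" using X1 by (simp add: L_def)
    have hJ: "L * (J - 1) < h" using ev x by (simp add: N'_def L_def X_def J_def)
    have eps: "L / X < \<epsilon>" using N1[of x] x by (simp add: N'_def L_def X_def)
    have m_eq: "m = J * v / X" using v0 X1 by (simp add: J_def Jfun_def m_def X_def v_def)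
    have LB: "Lg Ull x \<le> 1 / (X * L) * m + (- (L + 1) / (X^2 * L^2)) * v + 112 / (X^3 * L) * G / 3 * v"
      using lnln_Lg[OF G x(1)] X8 by (simp add: X_def L_def m_def v_def)
    also have "\<dots> = v / (X^2 * L) * ((L * (J - 1) - 1 + 112 * G * L / (3 * X)) / L)"
      unfolding m_eq using X1 L0 by (simp add: field_simps power2_eq_square power3_eq_cube)
    also have "\<dots> \<le> 0"
    proof (rule mult_nonneg_nonpos)
      show "0 \<le> v / (X^2 * L)" using v0 L0 X1 by simp
      have "112 * G * L / (3 * X) = (112 * G / 3) * (L / X)" by simp
      also have "\<dots> \<le> (112 * G / 3) * \<epsilon>" using eps by (intro mult_left_mono) auto
      also have "\<dots> = (1 - h) * (112 * G / (112 * G + 3))" by (simp add: \<epsilon>_def field_simps)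
      also have "\<dots> \<le> (1 - h) * 1" using h1 by (intro mult_left_mono) auto
      finally have "112 * G * L / (3 * X) \<le> 1 - h" by simp
      hence "L * (J - 1) - 1 + 112 * G * L / (3 * X) \<le> 0" using hJ by linarith
      thus "(L * (J - 1) - 1 + 112 * G * L / (3 * X)) / L \<le> 0" using L0 by (simp add: divide_nonpos_pos)
    qed
    finally show ?thesis .
  qed
  thus ?thesis by blast
qed

end

context mc begin

lemma Ull_nonneg: "0 \<le> Ull y"
proof (cases "3 \<le> y")
  case True
  have "exp 1 \<le> real y" using exp_le True by linarith
  hence "ln (exp 1) \<le> ln (real y)" using True by (subst ln_le_cancel_iff) auto
  hence "1 \<le> ln (real y)" by simp
  thus ?thesis using True by (simp add: Ull_def)
next
  case False thus ?thesis by (simp add: Ull_def)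
qed

lemma Ull_large: assumes "real y > exp (exp M)" "3 \<le> y" shows "Ull y > M"
proof -
  have "ln (exp (exp M)) < ln (real y)" using assms by (subst ln_less_cancel_iff) auto
  hence em: "exp M < ln (real y)" by simp
  have lpos: "0 < ln (real y)" using em exp_gt_zero[of M] by linarith
  have "ln (exp M) < ln (ln (real y))" using em lpos by (subst ln_less_cancel_iff) auto
  thus ?thesis using assms(2) by (simp add: Ull_def)
qed

lemma pos_rec_from:
  assumes irr: "irreducible S lam"
    and V0: "\<forall>y. 0 \<le> V y" and N1: "\<forall>x\<in>S. x \<ge> N1 \<longrightarrow> Lg V x \<le> -1"
    and N2: "\<forall>x\<in>S. x \<ge> N2 \<longrightarrow> Lg Ull x \<le> 0"
  shows "positive_recurrent S \<Gamma> lam"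
  unfolding positive_recurrent_def
proof
  fix z assume z: "z \<in> S"
  define F0 where "F0 = {x \<in> S. x < N1}"
  have F0: "finite F0" "F0 \<subseteq> S" by (auto simp: F0_def)
  define B where "B = Max (insert 0 ((\<lambda>x. 1 / q x + (\<Sum>y\<in>Y x. P x y * V y) - V x) ` F0))"
  have B0: "0 \<le> B" unfolding B_def using F0 by (intro Max_ge) auto
  have BF: "1 / q x + (\<Sum>y\<in>Y x. P x y * V y) - V x \<le> B" if "x \<in> F0" for x
    unfolding B_def using F0 that by (intro Max_ge) auto
  obtain W1 where W1: "\<forall>x. 0 \<le> W1 x"
    "\<forall>x\<in>S - {z}. (\<Sum>y\<in>Y x. P x y * W1 y) \<le> W1 x - (if x \<in> F0 then B else 0)"
    using W_exists[OF irr z F0 B0] by blast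
  define g where "g y = V y + W1 y" for y
  have g0: "0 \<le> g y" for y using V0 W1(1) by (simp add: g_def add_nonneg_nonneg)
  have gsup: "1 / q x + (\<Sum>y\<in>Y x - {z}. P x y * g y) \<le> g x" if x: "x \<in> S - {z}" for x
  proof -
    have xS: "x \<in> S" using x by auto
    have "(\<Sum>y\<in>Y x - {z}. P x y * g y) \<le> (\<Sum>y\<in>Y x. P x y * g y)"
      by (rule sum_mono2[OF Y_finite]) (use g0 P_nonneg[OF xS] in auto)
    also have "\<dots> = (\<Sum>y\<in>Y x. P x y * V y) + (\<Sum>y\<in>Y x. P x y * W1 y)"
      by (simp add: g_def algebra_simps sum.distrib)
    finally have 1: "(\<Sum>y\<in>Y x - {z}. P x y * g y) \<le> (\<Sum>y\<in>Y x. P x y * V y) + (\<Sum>y\<in>Y x. P x y * W1 y)" .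
    have W1x: "(\<Sum>y\<in>Y x. P x y * W1 y) \<le> W1 x - (if x \<in> F0 then B else 0)" using W1(2) x by blast
    show ?thesis
    proof (cases "x \<in> F0")
      case True
      thus ?thesis using 1 W1x BF[OF True] by (simp add: g_def)
    next
      case False
      hence "x \<ge> N1" using xS by (auto simp: F0_def)
      hence "Lg V x \<le> -1" using N1 xS by blast
      hence "Lg V x / q x \<le> (-1) / q x" using q_pos[OF xS] by (intro divide_right_mono) auto
      hence "(\<Sum>y\<in>Y x. P x y * V y) \<le> V x - 1 / q x" using gen_identity[OF xS, of V] by simp
      thus ?thesis using 1 W1x False by (simp add: g_def)
    qed
  qed
  have fin: "(\<integral>\<^sup>+ys. ennreal (path_prob \<Gamma> lam z ys * hold_time \<Gamma> lam z ys) \<partial>count_space (return_paths S z)) < \<infinity>"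
    by (rule ret_time_fin[where g = g, OF z]) (use g0 gsup in auto)
  define F1 where "F1 = {x \<in> S. x < N2}"
  have F1: "finite F1" "F1 \<subseteq> S" by (auto simp: F1_def)
  define B' where "B' = Max (insert 0 ((\<lambda>x. (\<Sum>y\<in>Y x. P x y * Ull y) - Ull x) ` F1))"
  have B'0: "0 \<le> B'" unfolding B'_def using F1 by (intro Max_ge) auto
  have BF': "(\<Sum>y\<in>Y x. P x y * Ull y) - Ull x \<le> B'" if "x \<in> F1" for x
    unfolding B'_def using F1 that by (intro Max_ge) auto
  obtain W2 where W2: "\<forall>x. 0 \<le> W2 x"
    "\<forall>x\<in>S - {z}. (\<Sum>y\<in>Y x. P x y * W2 y) \<le> W2 x - (if x \<in> F1 then B' else 0)"
    using W_exists[OF irr z F1 B'0] by blast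
  define U where "U y = Ull y + W2 y" for y
  have U0: "0 \<le> U y" for y using Ull_nonneg W2(1) by (simp add: U_def add_nonneg_nonneg)
  have Usup: "(\<Sum>y\<in>Y x - {z}. P x y * U y) \<le> U x" if x: "x \<in> S - {z}" for x
  proof -
    have xS: "x \<in> S" using x by auto
    have "(\<Sum>y\<in>Y x - {z}. P x y * U y) \<le> (\<Sum>y\<in>Y x. P x y * U y)"
      by (rule sum_mono2[OF Y_finite]) (use U0 P_nonneg[OF xS] in auto)
    also have "\<dots> = (\<Sum>y\<in>Y x. P x y * Ull y) + (\<Sum>y\<in>Y x. P x y * W2 y)"
      by (simp add: U_def algebra_simps sum.distrib)
    finally have 1: "(\<Sum>y\<in>Y x - {z}. P x y * U y) \<le> (\<Sum>y\<in>Y x. P x y * Ull y) + (\<Sum>y\<in>Y x. P x y * W2 y)" .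
    have W2x: "(\<Sum>y\<in>Y x. P x y * W2 y) \<le> W2 x - (if x \<in> F1 then B' else 0)" using W2(2) x by blast
    show ?thesis
    proof (cases "x \<in> F1")
      case True
      thus ?thesis using 1 W2x BF'[OF True] by (simp add: U_def)
    next
      case False
      hence "x \<ge> N2" using xS by (auto simp: F1_def)
      hence "Lg Ull x \<le> 0" using N2 xS by blast
      hence "Lg Ull x / q x \<le> 0" using q_pos[OF xS] by (simp add: divide_nonpos_pos)
      hence "(\<Sum>y\<in>Y x. P x y * Ull y) \<le> Ull x" using gen_identity[OF xS, of Ull] by simp
      thus ?thesis using 1 W2x False by (simp add: U_def)
    qed
  qed
  have Ufin: "finite {x \<in> S. U x \<le> M}" for M
  proof (rule finite_subset[of _ "{..max 3 (nat \<lceil>exp (exp M)\<rceil>)}"])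
    show "{x \<in> S. U x \<le> M} \<subseteq> {..max 3 (nat \<lceil>exp (exp M)\<rceil>)}"
    proof
      fix x assume "x \<in> {x \<in> S. U x \<le> M}"
      hence "Ull x \<le> M" using W2(1) by (simp add: U_def) (smt (verit))
      show "x \<in> {..max 3 (nat \<lceil>exp (exp M)\<rceil>)}"
      proof (rule ccontr)
        assume "x \<notin> {..max 3 (nat \<lceil>exp (exp M)\<rceil>)}"
        hence "x > 3" "x > nat \<lceil>exp (exp M)\<rceil>" by auto
        hence "real x > exp (exp M)" by linarith
        hence "Ull x > M" using Ull_large \<open>x > 3\<close> by simp
        thus False using \<open>Ull x \<le> M\<close> by simp
      qed
    qed
  qed simp
  have h1: "hl z y = 1" if "y \<in> S - {z}" for y
    by (rule recurrence[OF z irr _ Ufin Usup that]) (use U0 in auto)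
  have "hl z z = P z z + (\<Sum>y\<in>Y z - {z}. P z y * hl z y)" by (rule hl_harm[OF z z])
  also have "\<dots> = (\<Sum>y\<in>Y z. P z y)"
  proof -
    have "z \<notin> Y z" by (simp add: Y_def)
    hence "Y z - {z} = Y z" by simp
    moreover have "(\<Sum>y\<in>Y z. P z y * hl z y) = (\<Sum>y\<in>Y z. P z y)"
      by (rule sum.cong) (use h1 Y_sub \<open>z \<notin> Y z\<close> in auto)
    ultimately show ?thesis by (simp add: jump_prob_def)
  qed
  also have "\<dots> = 1" by (rule sumP[OF z])
  finally have "hl z z = 1" .
  hence "(\<integral>\<^sup>+ys. ennreal (path_prob \<Gamma> lam z ys) \<partial>count_space (return_paths S z)) = 1"
    using ret_prob_eq[OF z z] by simp
  with fin show "(\<integral>\<^sup>+ys. ennreal (path_prob \<Gamma> lam z ys) \<partial>count_space (return_paths S z)) = 1 \<and>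
        (\<integral>\<^sup>+ys. ennreal (path_prob \<Gamma> lam z ys * hold_time \<Gamma> lam z ys) \<partial>count_space (return_paths S z)) < \<infinity>"
    by blast
qed

end

lemma ev_to_N:
  assumes "eventually P (inf sequentially (principal S))"
  shows "\<exists>N. \<forall>x\<in>S. x \<ge> N \<longrightarrow> P x"
  using assms unfolding eventually_inf_principal eventually_sequentially by auto

theorem mainTheorem10:
  fixes S :: "nat set" and \<Gamma> :: "int set" and lam :: "int \<Rightarrow> nat \<Rightarrow> real"
  assumes S_inf: "infinite S"
    and irred: "irreducible S lam"
    and Gamma_fin: "finite \<Gamma>"
    and Gamma_supp: "\<forall>x\<in>S. \<forall>\<eta>. \<eta> \<notin> \<Gamma> \<longrightarrow> lam \<eta> x = 0"
    and rates_nonneg: "\<forall>x\<in>S. \<forall>\<eta>. 0 \<le> lam \<eta> x"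
    and rates_in_S: "\<forall>x\<in>S. \<forall>\<eta>. int x + \<eta> \<notin> int ` S \<longrightarrow> lam \<eta> x = 0"
    and v_pos: "\<forall>x\<in>S. diffu \<Gamma> lam x > 0"
    and cases:
      "(\<exists>c::real. c \<le> 2 \<and> gtrsim S (diffu \<Gamma> lam) (\<lambda>x. real x powr c) \<and>
           Limsup (inf sequentially (principal S)) (\<lambda>x. ereal (Jfun \<Gamma> lam x)) < ereal (c - 1))
       \<or> (\<exists>c::real. c > 2 \<and> gtrsim S (diffu \<Gamma> lam) (\<lambda>x. real x powr c) \<and>
           Limsup (inf sequentially (principal S)) (\<lambda>x. ereal (H1fun \<Gamma> lam x)) < 1)"
  shows "positive_recurrent S \<Gamma> lam"
proof -
  interpret mc S \<Gamma> lam
    by unfold_locales (use Gamma_fin Gamma_supp rates_nonneg rates_in_S v_pos in auto)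
  define FF where "FF = inf sequentially (principal S)"
  have key: "\<exists>c C0 N0 Js h. Js < c - 1 \<and> h < 1 \<and> C0 > 0 \<and>
      (\<forall>x\<in>S. x \<ge> N0 \<longrightarrow> real x powr c \<le> C0 * diffu \<Gamma> lam x \<and> Jfun \<Gamma> lam x < Js
          \<and> ln (real x) * (Jfun \<Gamma> lam x - 1) < h)"
    using cases
  proof (elim disjE exE conjE)
    fix c :: real
    assume c2: "c \<le> 2" and gt: "gtrsim S (diffu \<Gamma> lam) (\<lambda>x. real x powr c)"
      and ls: "Limsup (inf sequentially (principal S)) (\<lambda>x. ereal (Jfun \<Gamma> lam x)) < ereal (c - 1)"
    obtain C0 where C0: "C0 > 0" and ev1: "eventually (\<lambda>x. real x powr c \<le> C0 * diffu \<Gamma> lam x) FF"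
      using gt unfolding gtrsim_def FF_def by blast
    obtain Js where Js: "Limsup FF (\<lambda>x. ereal (Jfun \<Gamma> lam x)) < ereal Js" "ereal Js < ereal (c - 1)"
      using ereal_dense2[OF ls] unfolding FF_def by blast
    have ev2: "eventually (\<lambda>x. ereal (Jfun \<Gamma> lam x) < ereal Js) FF" by (rule Limsup_lessD[OF Js(1)])
    obtain N1 where N1: "\<forall>x\<in>S. x \<ge> N1 \<longrightarrow> real x powr c \<le> C0 * diffu \<Gamma> lam x"
      using ev_to_N[OF ev1[unfolded FF_def]] by blast
    obtain N2 where N2: "\<forall>x\<in>S. x \<ge> N2 \<longrightarrow> ereal (Jfun \<Gamma> lam x) < ereal Js"
      using ev_to_N[OF ev2[unfolded FF_def]] by blast
    have Jsc: "Js < c - 1" using Js(2) by simp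
    show ?thesis
    proof (intro exI conjI ballI impI)
      show "Js < c - 1" by (rule Jsc)
      show "(0::real) < 1" by simp
      show "C0 > 0" by (rule C0)
      fix x assume x: "x \<in> S" "max (max N1 N2) 2 \<le> x"
      show "real x powr c \<le> C0 * diffu \<Gamma> lam x" using N1 x by auto
      show J: "Jfun \<Gamma> lam x < Js" using N2 x by auto
      have "ln (real x) > 0" using x by simp
      moreover have "Jfun \<Gamma> lam x - 1 < 0" using J Jsc c2 by linarith
      ultimately show "ln (real x) * (Jfun \<Gamma> lam x - 1) < 0" by (rule mult_pos_neg)
    qed
  next
    fix c :: real
    assume c2: "c > 2" and gt: "gtrsim S (diffu \<Gamma> lam) (\<lambda>x. real x powr c)"
      and ls: "Limsup (inf sequentially (principal S)) (\<lambda>x. ereal (H1fun \<Gamma> lam x)) < 1"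
    obtain C0 where C0: "C0 > 0" and ev1: "eventually (\<lambda>x. real x powr c \<le> C0 * diffu \<Gamma> lam x) FF"
      using gt unfolding gtrsim_def FF_def by blast
    have ls': "Limsup FF (\<lambda>x. ereal (H1fun \<Gamma> lam x)) < ereal 1" using ls unfolding FF_def one_ereal_def .
    obtain h where h: "Limsup FF (\<lambda>x. ereal (H1fun \<Gamma> lam x)) < ereal h" "ereal h < ereal 1"
      using ereal_dense2[OF ls'] by blast
    have ev2: "eventually (\<lambda>x. ereal (H1fun \<Gamma> lam x) < ereal h) FF" by (rule Limsup_lessD[OF h(1)])
    obtain N1 where N1: "\<forall>x\<in>S. x \<ge> N1 \<longrightarrow> real x powr c \<le> C0 * diffu \<Gamma> lam x"
      using ev_to_N[OF ev1[unfolded FF_def]] by blast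
    obtain N2 where N2: "\<forall>x\<in>S. x \<ge> N2 \<longrightarrow> ereal (H1fun \<Gamma> lam x) < ereal h"
      using ev_to_N[OF ev2[unfolded FF_def]] by blast
    have h1: "h < 1" using h(2) by simp
    define N3 where "N3 = nat \<lceil>exp (2 / (c - 2))\<rceil>"
    show ?thesis
    proof (intro exI conjI ballI impI)
      show "c / 2 < c - 1" using c2 by simp
      show "h < 1" by (rule h1)
      show "C0 > 0" by (rule C0)
      fix x assume x: "x \<in> S" "max (max N1 N2) (max N3 2) \<le> x"
      show "real x powr c \<le> C0 * diffu \<Gamma> lam x" using N1 x by auto
      have v0: "diffu \<Gamma> lam x > 0" using v_pos x by auto
      have "H1fun \<Gamma> lam x < h" using N2 x by auto
      moreover have "H1fun \<Gamma> lam x = ln (real x) * (Jfun \<Gamma> lam x - 1)"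
        using v0 by (simp add: H1fun_def Jfun_def field_simps)
      ultimately show hx: "ln (real x) * (Jfun \<Gamma> lam x - 1) < h" by simp
      have "real x \<ge> exp (2 / (c - 2))" using x by (simp add: N3_def)
      hence "ln (exp (2 / (c - 2))) \<le> ln (real x)" using x by (subst ln_le_cancel_iff) auto
      hence lx: "2 / (c - 2) \<le> ln (real x)" by simp
      have cpos: "0 < 2 / (c - 2)" using c2 by simp
      show "Jfun \<Gamma> lam x < c / 2"
      proof (cases "Jfun \<Gamma> lam x - 1 \<le> 0")
        case True thus ?thesis using c2 by simp
      next
        case False
        hence "2 / (c - 2) * (Jfun \<Gamma> lam x - 1) \<le> ln (real x) * (Jfun \<Gamma> lam x - 1)"
          using lx by (intro mult_right_mono) auto
        hence "2 / (c - 2) * (Jfun \<Gamma> lam x - 1) < 1" using hx h1 by linarith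
        hence "2 * (Jfun \<Gamma> lam x - 1) < c - 2" using c2 by (simp add: field_simps)
        thus ?thesis by simp
      qed
    qed
  qed
  then obtain c C0 N0 Js h where Jsc: "Js < c - 1" and h1: "h < 1" and C0: "C0 > 0"
    and ev: "\<forall>x\<in>S. x \<ge> N0 \<longrightarrow> real x powr c \<le> C0 * diffu \<Gamma> lam x \<and> Jfun \<Gamma> lam x < Js
          \<and> ln (real x) * (Jfun \<Gamma> lam x - 1) < h"
    by blast
  define lo where "lo = 2 - c"
  define hi where "hi = 1 - Js"
  have lohi: "lo < hi" using Jsc by (simp add: lo_def hi_def)
  define \<alpha> where "\<alpha> = (if (lo + hi) / 2 = 0 then (lo + 3 * hi) / 4 else (lo + hi) / 2)"
  have a0: "\<alpha> \<noteq> 0" using lohi by (simp add: \<alpha>_def)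
  have alo: "lo < \<alpha>" "\<alpha> < hi" using lohi by (auto simp: \<alpha>_def)
  define \<delta> where "\<delta> = hi - \<alpha>"
  have d0: "\<delta> > 0" using alo by (simp add: \<delta>_def)
  have ac: "\<alpha> - 2 + c \<ge> 0" using alo by (simp add: lo_def)
  have evV: "\<forall>x\<in>S. x \<ge> N0 \<longrightarrow> Jfun \<Gamma> lam x < 1 - \<alpha> - \<delta> \<and> real x powr c \<le> C0 * diffu \<Gamma> lam x"
    using ev by (simp add: \<delta>_def hi_def)
  obtain V N1 where V: "\<forall>y. 0 \<le> V y" "\<forall>x\<in>S. x \<ge> N1 \<longrightarrow> Lg V x \<le> -1"
    using V_final[OF a0 d0 C0 ac evV] by blast
  have evU: "\<forall>x\<in>S. x \<ge> N0 \<longrightarrow> ln (real x) * (Jfun \<Gamma> lam x - 1) < h" using ev by blast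
  obtain N2 where N2: "\<forall>x\<in>S. x \<ge> N2 \<longrightarrow> Lg Ull x \<le> 0"
    using U_final[OF h1 evU] by blast
  show ?thesis by (rule pos_rec_from[OF irred V N2])
qed

end
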